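(* For all sufficiently large $K>0$ the following hold: for every $x\in X$, $\mathcal L_x(\Lambda_K^x)\subset\Lambda_{\zeta K}^{fx}$; and there is a constant $M=M(K)<\infty$ such that for every $x\in X$, the diameter of $\mathcal L_x(\Lambda_K^x)$ with respect to the Hilbert projective metric of the cone $\Lambda_K^{fx}$ is at most $M$.
   Context: Standing setting. $X$ and $Y$ are compact connected Riemannian manifolds, $X\times Y$ has the metric $d((x,y),(x',y'))=d_X(x,x')+d_Y(y,y')$. $F(x,y)=(f(x),g_x(y))$ is a skew product which is a Lipschitz local homeomorphism; $Y_x=\{x\}\times Y$ is identified with $Y$. $f$ is uniformly expanding: there are $\gamma>1$, $\delta_f>0$ with $d_X(fx,fx')\ge\gamma d_X(x,x')$ whenever $d_X(x,x')\le\delta_f$. Every $y$ has exactly $d$ preimages under each $g_x$. There is a continuous function $L(\cdot,\cdot)$ such that each $z$ has a neighbourhood $U_z$ on which $F$ is injective and the inverse of $F|_{U_z}$ is $L(z)$-Lipschitz on $F(U_z)$. There are $L\ge1$ and open $\mathcal A\subset X\times Y$ with: (A1) $L(z)\le L$ on $\mathcal A$ and $L(z)<\gamma^{-1}$ off $\mathcal A$; (A2) a finite cover $\mathcal U$ of $X\times Y$ by open sets on which $F$ is injective, with $\mathcal A$ covered by $q<d$ elements of $\mathcal U$ and each element of $\mathcal U$ meeting at most one curve of $F^{-1}(c)$ for every distance-minimizing geodesic $c$. The potential $\varphi$ is $\alpha$-Hölder ($0<\alpha<1$), $|\varphi|_\alpha=\sup_{z\ne z'}|\varphi(z)-\varphi(z')|/d(z,z')^\alpha$,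 satisfying (P): $\sup\varphi-\inf\varphi<\varepsilon_\varphi$ and $|e^\varphi|_\alpha<\varepsilon_\varphi e^{\inf\varphi}$, where $\varepsilon_\varphi>0$ satisfies $s:=e^{\varepsilon_\varphi}\frac{(d-q)\gamma^{-\alpha}+qL^\alpha}{d}<1$ and $\zeta:=s+2s\varepsilon_\varphi\,\mathrm{diam}(Y)^\alpha<1$. Fiberwise operator: $\mathcal L_x\colon C(Y_x)\to C(Y_{fx})$, $\mathcal L_x\psi(y)=\sum_{\bar y\in g_x^{-1}(y)}e^{\varphi(x,\bar y)}\psi(\bar y)$. Cones: for $K>0$ and $x\in X$, $\Lambda_K^x=\{\psi\colon Y_x\to(0,\infty)\ \alpha\text{-Hölder}: |\psi|_\alpha\le K\inf\psi\}\cup\{0\}$. For a cone $\Lambda$, write $\phi\preceq\psi$ iff $\psi-\phi\in\Lambda\cup\{0\}$; $A(\phi,\psi)=\sup\{t>0:t\phi\preceq\psi\}$, $B(\phi,\psi)=\inf\{t>0:\psi\preceq t\phi\}$, and the Hilbert projective metric is $\Theta(\phi,\psi)=\log(B/A)$. *)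

theory Defs
  imports "HOL-Analysis.Analysis"
begin

definition pdist :: "('x::metric_space \<times> 'y::metric_space) \<Rightarrow> ('x \<times> 'y) \<Rightarrow> real" where
  "pdist z w = dist (fst z) (fst w) + dist (snd z) (snd w)"

definition holder :: "real \<Rightarrow> ('a \<Rightarrow> 'a \<Rightarrow> real) \<Rightarrow> ('a \<Rightarrow> real) \<Rightarrow> bool" where
  "holder \<alpha> D h \<longleftrightarrow> (\<exists>C. \<forall>a b. \<bar>h a - h b\<bar> \<le> C * D a b powr \<alpha>)"

definition holder_semi :: "real \<Rightarrow> ('a \<Rightarrow> 'a \<Rightarrow> real) \<Rightarrow> ('a \<Rightarrow> real) \<Rightarrow> real" where
  "holder_semi \<alpha> D h = Sup (insert 0 {\<bar>h a - h b\<bar> / D a b powr \<alpha> | a b. a \<noteq> b})"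

definition min_geodesic :: "('a \<Rightarrow> 'a \<Rightarrow> real) \<Rightarrow> (real \<Rightarrow> 'a) \<Rightarrow> real \<Rightarrow> bool" where
  "min_geodesic D c l \<longleftrightarrow> 0 \<le> l \<and> (\<forall>s\<in>{0..l}. \<forall>t\<in>{0..l}. D (c s) (c t) = \<bar>s - t\<bar>)"

definition geodesic_space :: "('a \<Rightarrow> 'a \<Rightarrow> real) \<Rightarrow> bool" where
  "geodesic_space D \<longleftrightarrow> (\<forall>a b. \<exists>c l. min_geodesic D c l \<and> c 0 = a \<and> c l = b)"

definition local_homeo :: "('a::topological_space \<Rightarrow> 'a) \<Rightarrow> bool" where
  "local_homeo F \<longleftrightarrow> (\<forall>z. \<exists>U G. open U \<and> z \<in> U \<and> open (F ` U) \<and> homeomorphism U (F ` U) F G)"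

definition transfer :: "('x \<Rightarrow> 'y \<Rightarrow> 'y) \<Rightarrow> ('x \<times> 'y \<Rightarrow> real) \<Rightarrow> 'x \<Rightarrow> ('y \<Rightarrow> real) \<Rightarrow> ('y \<Rightarrow> real)" where
  "transfer g \<phi> x \<psi> = (\<lambda>y. \<Sum>yb\<in>{yb. g x yb = y}. exp (\<phi> (x, yb)) * \<psi> yb)"

text \<open>The cone Lambda_K (on Y, identified with every fibre Y_x).\<close>
definition hcone :: "real \<Rightarrow> real \<Rightarrow> ('y::metric_space \<Rightarrow> real) set" where
  "hcone \<alpha> K = {\<psi>. (\<forall>y. 0 < \<psi> y) \<and> holder \<alpha> dist \<psi> \<and>
                    holder_semi \<alpha> dist \<psi> \<le> K * Inf (range \<psi>)} \<union> {\<lambda>_. 0}"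

definition cone_le :: "('a \<Rightarrow> real) set \<Rightarrow> ('a \<Rightarrow> real) \<Rightarrow> ('a \<Rightarrow> real) \<Rightarrow> bool" where
  "cone_le C \<phi> \<psi> \<longleftrightarrow> (\<lambda>y. \<psi> y - \<phi> y) \<in> C \<union> {\<lambda>_. 0}"

definition cone_A :: "('a \<Rightarrow> real) set \<Rightarrow> ('a \<Rightarrow> real) \<Rightarrow> ('a \<Rightarrow> real) \<Rightarrow> ereal" where
  "cone_A C \<phi> \<psi> = Sup (ereal ` {t. 0 < t \<and> cone_le C (\<lambda>y. t * \<phi> y) \<psi>})"

definition cone_B :: "('a \<Rightarrow> real) set \<Rightarrow> ('a \<Rightarrow> real) \<Rightarrow> ('a \<Rightarrow> real) \<Rightarrow> ereal" where
  "cone_B C \<phi> \<psi> = Inf (ereal ` {t. 0 < t \<and> cone_le C \<psi> (\<lambda>y. t * \<phi> y)})"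

definition hilbert_metric :: "('a \<Rightarrow> real) set \<Rightarrow> ('a \<Rightarrow> real) \<Rightarrow> ('a \<Rightarrow> real) \<Rightarrow> ereal" where
  "hilbert_metric C \<phi> \<psi> =
     (let A = cone_A C \<phi> \<psi>; B = cone_B C \<phi> \<psi> in
      if 0 < A \<and> A < \<infinity> \<and> 0 < B \<and> B < \<infinity>
      then ereal (ln (real_of_ereal B / real_of_ereal A)) else \<infinity>)"

end

theory Submission
  imports Defs
begin

locale fib =
  fixes h :: "'y::metric_space \<Rightarrow> 'y" and Lx :: "'y \<Rightarrow> real" and d :: nat
  assumes inj_loc: "\<And>b. \<exists>e>0. inj_on h (ball b e) \<and>
      (\<forall>b1\<in>ball b e. \<forall>b2\<in>ball b e. dist b1 b2 \<le> Lx b * dist (h b1) (h b2))"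
  and sect: "\<And>b. \<exists>e>0. \<exists>G. continuous_on (ball (h b) e) G \<and> G (h b) = b \<and> (\<forall>v\<in>ball (h b) e. h (G v) = v)"
  and fin: "\<And>y. finite (h -` {y})" and crd: "\<And>y. card (h -` {y}) = d"
begin

lemma uniq:
  fixes p1 p2 :: "real \<Rightarrow> 'y"
  assumes I: "connected I" and c1: "continuous_on I p1" and c2: "continuous_on I p2"
    and hh: "\<forall>t\<in>I. h (p1 t) = h (p2 t)" and t0: "t0 \<in> I" "p1 t0 = p2 t0" and t: "t \<in> I"
  shows "p1 t = p2 t"
proof (rule ccontr)
  assume ne: "p1 t \<noteq> p2 t"
  define E1 where "E1 = {t\<in>I. p1 t = p2 t}"
  define E2 where "E2 = {t\<in>I. p1 t \<noteq> p2 t}"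
  have o1: "openin (top_of_set I) E1"
    unfolding openin_euclidean_subtopology_iff
  proof (intro conjI ballI)
    show "E1 \<subseteq> I" by (auto simp: E1_def)
  next
    fix u assume u: "u \<in> E1"
    obtain e where e: "e > 0" "inj_on h (ball (p1 u) e)" using inj_loc by blast
    obtain d1 where d1: "d1 > 0" "\<forall>x'\<in>I. dist x' u < d1 \<longrightarrow> dist (p1 x') (p1 u) < e"
      using c1 u e(1) unfolding continuous_on_iff E1_def by blast
    obtain d2 where d2: "d2 > 0" "\<forall>x'\<in>I. dist x' u < d2 \<longrightarrow> dist (p2 x') (p2 u) < e"
      using c2 u e(1) unfolding continuous_on_iff E1_def by blast
    show "\<exists>e>0. \<forall>x'\<in>I. dist x' u < e \<longrightarrow> x' \<in> E1"
    proof (intro exI[of _ "min d1 d2"] conjI ballI impI)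
      fix x' assume x': "x' \<in> I" "dist x' u < min d1 d2"
      have "p1 x' \<in> ball (p1 u) e" using d1 x' by (auto simp: dist_commute)
      moreover have "p2 x' \<in> ball (p1 u) e" using d2 x' u by (auto simp: dist_commute E1_def)
      ultimately show "x' \<in> E1" using e(2) hh x' unfolding inj_on_def E1_def by auto
    qed (use d1 d2 in auto)
  qed
  have o2: "openin (top_of_set I) E2"
    unfolding openin_euclidean_subtopology_iff
  proof (intro conjI ballI)
    show "E2 \<subseteq> I" by (auto simp: E2_def)
  next
    fix u assume u: "u \<in> E2"
    define e where "e = dist (p1 u) (p2 u) / 2"
    have e: "e > 0" using u by (auto simp: E2_def e_def)
    obtain d1 where d1: "d1 > 0" "\<forall>x'\<in>I. dist x' u < d1 \<longrightarrow> dist (p1 x') (p1 u) < e"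
      using c1 u e unfolding continuous_on_iff E2_def by blast
    obtain d2 where d2: "d2 > 0" "\<forall>x'\<in>I. dist x' u < d2 \<longrightarrow> dist (p2 x') (p2 u) < e"
      using c2 u e unfolding continuous_on_iff E2_def by blast
    show "\<exists>e>0. \<forall>x'\<in>I. dist x' u < e \<longrightarrow> x' \<in> E2"
    proof (intro exI[of _ "min d1 d2"] conjI ballI impI)
      fix x' assume x': "x' \<in> I" "dist x' u < min d1 d2"
      have a: "dist (p1 x') (p1 u) < e" "dist (p2 x') (p2 u) < e" using d1 d2 x' by auto
      have "dist (p1 u) (p2 u) \<le> dist (p1 x') (p1 u) + dist (p1 x') (p2 u)"
        by (rule dist_triangle3)
      also have "\<dots> \<le> dist (p1 x') (p1 u) + (dist (p1 x') (p2 x') + dist (p2 x') (p2 u))"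
        using dist_triangle by simp
      finally have "dist (p1 x') (p2 x') > 0" using a e_def by linarith
      then show "x' \<in> E2" using x' by (auto simp: E2_def)
    qed (use d1 d2 in auto)
  qed
  have "I \<subseteq> E1 \<union> E2" "E1 \<inter> E2 = {}" "E1 \<noteq> {}" "E2 \<noteq> {}"
    using t0 t ne by (auto simp: E1_def E2_def)
  then show False using I o1 o2 unfolding connected_openin by blast
qed

lemma local_lift:
  fixes c :: "real \<Rightarrow> 'y"
  assumes cc: "continuous_on {0..l} c" and tau: "\<tau> \<in> {0..l}" and b: "h b = c \<tau>"
  shows "\<exists>\<epsilon>>0. \<exists>q. continuous_on ({0..l} \<inter> cball \<tau> \<epsilon>) q \<and> q \<tau> = b \<and>
           (\<forall>s\<in>{0..l} \<inter> cball \<tau> \<epsilon>. h (q s) = c s)"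
proof -
  obtain e G where e: "e > 0" "continuous_on (ball (h b) e) G" "G (h b) = b"
    "\<forall>v\<in>ball (h b) e. h (G v) = v" using sect by blast
  obtain \<delta> where \<delta>: "\<delta> > 0" "\<forall>s\<in>{0..l}. dist s \<tau> < \<delta> \<longrightarrow> dist (c s) (c \<tau>) < e"
    using cc tau e(1) unfolding continuous_on_iff by blast
  have sub: "c ` ({0..l} \<inter> cball \<tau> (\<delta>/2)) \<subseteq> ball (h b) e"
  proof
    fix v assume "v \<in> c ` ({0..l} \<inter> cball \<tau> (\<delta>/2))"
    then obtain s where s: "s \<in> {0..l}" "dist \<tau> s \<le> \<delta>/2" "v = c s" by auto
    then have "dist s \<tau> < \<delta>" using \<delta>(1) by (simp add: dist_commute)
    then show "v \<in> ball (h b) e" using \<delta>(2) s b by (auto simp: dist_commute)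
  qed
  have "continuous_on ({0..l} \<inter> cball \<tau> (\<delta>/2)) (\<lambda>s. G (c s))"
  proof (rule continuous_on_compose2[OF e(2) _ sub])
    show "continuous_on ({0..l} \<inter> cball \<tau> (\<delta>/2)) c"
      by (rule continuous_on_subset[OF cc]) auto
  qed
  moreover have "\<forall>s\<in>{0..l} \<inter> cball \<tau> (\<delta>/2). h (G (c s)) = c s" using sub e(4) by auto
  moreover have "G (c \<tau>) = b" using e(3) b by simp
  ultimately have "\<exists>q. continuous_on ({0..l} \<inter> cball \<tau> (\<delta>/2)) q \<and> q \<tau> = b \<and>
           (\<forall>s\<in>{0..l} \<inter> cball \<tau> (\<delta>/2). h (q s) = c s)" by (intro exI[of _ "\<lambda>s. G (c s)"] conjI)
  moreover have "\<delta>/2 > 0" using \<delta>(1) by simp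
  ultimately show ?thesis by (intro exI[of _ "\<delta>/2"] conjI)
qed

lemma lift_exists:
  fixes c :: "real \<Rightarrow> 'y"
  assumes cc: "continuous_on {0..l} c" and l: "0 \<le> l" and a: "h a = c 0"
  shows "\<exists>p. continuous_on {0..l} p \<and> p 0 = a \<and> (\<forall>s\<in>{0..l}. h (p s) = c s)"
proof -
  define P where "P t \<longleftrightarrow> (\<exists>p. continuous_on {0..t} p \<and> p 0 = a \<and> (\<forall>s\<in>{0..t}. h (p s) = c s))" for t
  have P0: "P 0" unfolding P_def
  proof (intro exI[of _ "\<lambda>_. a"] conjI)
    show "continuous_on {0..0} (\<lambda>_. a)" by (rule continuous_on_const)
    show "(\<lambda>_. a) 0 = a" by simp
    show "\<forall>s\<in>{0..0}. h ((\<lambda>_. a) s) = c s" using a by simp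
  qed
  have Pdown: "P t" if H: "P t'" "0 \<le> t" "t \<le> t'" for t t'
  proof -
    obtain p where p: "continuous_on {0..t'} p" "p 0 = a" "\<forall>s\<in>{0..t'}. h (p s) = c s"
      using H(1) unfolding P_def by blast
    have c1: "continuous_on {0..t} p" by (rule continuous_on_subset[OF p(1)]) (use H in auto)
    have c2: "\<forall>s\<in>{0..t}. h (p s) = c s" using p(3) H(3) by auto
    show ?thesis unfolding P_def using c1 c2 p(2) by blast
  qed
  have ext: "\<exists>t'>t. t' \<le> l \<and> P t'" if t: "0 \<le> t" "t < l" and Pt: "P t" for t
  proof -
    obtain p where p: "continuous_on {0..t} p" "p 0 = a" "\<forall>s\<in>{0..t}. h (p s) = c s"
      using Pt unfolding P_def by blast
    obtain \<epsilon> q where q: "\<epsilon> > 0" "continuous_on ({0..l} \<inter> cball t \<epsilon>) q" "q t = p t"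
      "\<forall>s\<in>{0..l} \<inter> cball t \<epsilon>. h (q s) = c s"
      using local_lift[OF cc, of t "p t"] t p(3) by auto
    define t' where "t' = min l (t + \<epsilon>)"
    have tt': "t < t'" "t' \<le> l" using t q(1) by (auto simp: t'_def)
    have sub: "{x \<in> {0..t'}. t \<le> x} \<subseteq> {0..l} \<inter> cball t \<epsilon>"
      using t q(1) by (auto simp: t'_def dist_real_def)
    have "continuous_on {0..t'} (\<lambda>s. if s \<le> t then p s else q s)"
    proof (rule continuous_on_cases_le[where h="\<lambda>x. x"])
      show "continuous_on {x \<in> {0..t'}. x \<le> t} p"
        by (rule continuous_on_subset[OF p(1)]) auto
      show "continuous_on {x \<in> {0..t'}. t \<le> x} q"
        by (rule continuous_on_subset[OF q(2) sub])
    qed (use q(3) in \<open>auto intro: continuous_intros\<close>)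
    moreover have "\<forall>s\<in>{0..t'}. h (if s \<le> t then p s else q s) = c s"
    proof
      fix s assume s: "s \<in> {0..t'}"
      show "h (if s \<le> t then p s else q s) = c s"
      proof (cases "s \<le> t")
        case True then show ?thesis using p(3) s by auto
      next
        case False then have "s \<in> {0..l} \<inter> cball t \<epsilon>" using sub s by auto
        then show ?thesis using q(4) False by auto
      qed
    qed
    ultimately have "P t'" unfolding P_def using p(2) t(1) by (intro exI[of _ "\<lambda>s. if s \<le> t then p s else q s"]) auto
    then show ?thesis using tt' by blast
  qed
  have dpos: "d \<ge> 1"
  proof -
    have "h -` {c 0} \<noteq> {}" using a by auto
    then have "card (h -` {c 0}) > 0" using fin card_gt_0_iff by blast
    then show ?thesis using crd by simp
  qed
  have closed: "P T" if T: "0 < T" "T \<le> l" and below: "\<forall>t. 0 \<le> t \<and> t < T \<longrightarrow> P t" for T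
  proof -
    define \<Phi> where "\<Phi> = h -` {c T}"
    have Tin: "T \<in> {0..l}" using T by auto
    have "\<forall>b\<in>\<Phi>. \<exists>\<epsilon> q. \<epsilon>>0 \<and> continuous_on ({0..l} \<inter> cball T \<epsilon>) q \<and> q T = b \<and>
           (\<forall>s\<in>{0..l} \<inter> cball T \<epsilon>. h (q s) = c s)"
      using local_lift[OF cc Tin] unfolding \<Phi>_def by blast
    then obtain E Q where EQ: "\<forall>b\<in>\<Phi>. E b > 0 \<and> continuous_on ({0..l} \<inter> cball T (E b)) (Q b) \<and> Q b T = b \<and>
           (\<forall>s\<in>{0..l} \<inter> cball T (E b). h (Q b s) = c s)" by metis
    have finP: "finite \<Phi>" "card \<Phi> = d" using fin crd by (auto simp: \<Phi>_def)
    then have neP: "\<Phi> \<noteq> {}" using dpos by auto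
    define \<epsilon> where "\<epsilon> = Min (E ` \<Phi>)"
    have \<epsilon>: "\<epsilon> > 0" "\<forall>b\<in>\<Phi>. \<epsilon> \<le> E b" using finP neP EQ by (auto simp: \<epsilon>_def)
    define t where "t = max 0 (T - \<epsilon>/2)"
    have t: "0 \<le> t" "t < T" using T \<epsilon> by (auto simp: t_def)
    have J: "{t..T} \<subseteq> {0..l} \<inter> cball T (E b)" if "b \<in> \<Phi>" for b
      using t T \<epsilon> that by (auto simp: t_def dist_real_def)
    obtain p where p: "continuous_on {0..t} p" "p 0 = a" "\<forall>s\<in>{0..t}. h (p s) = c s"
      using below t unfolding P_def by blast
    have injQ: "inj_on (\<lambda>b. Q b t) \<Phi>"
    proof (rule inj_onI)
      fix b b' assume bb: "b \<in> \<Phi>" "b' \<in> \<Phi>" "Q b t = Q b' t"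
      have "Q b T = Q b' T"
      proof (rule uniq[of "{t..T}"])
        show "continuous_on {t..T} (Q b)" using EQ bb J[of b] continuous_on_subset by blast
        show "continuous_on {t..T} (Q b')" using EQ bb J[of b'] continuous_on_subset by blast
        show "\<forall>s\<in>{t..T}. h (Q b s) = h (Q b' s)" using EQ bb J[of b] J[of b'] by (metis subsetD)
      qed (use bb t in auto)
      then show "b = b'" using EQ bb by auto
    qed
    have "(\<lambda>b. Q b t) ` \<Phi> \<subseteq> h -` {c t}"
    proof
      fix v assume "v \<in> (\<lambda>b. Q b t) ` \<Phi>"
      then obtain b where b: "b \<in> \<Phi>" "v = Q b t" by blast
      have "t \<in> {t..T}" using t by simp
      then have "t \<in> {0..l} \<inter> cball T (E b)" using J[OF b(1)] by blast
      then show "v \<in> h -` {c t}" using EQ b by auto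
    qed
    moreover have "card ((\<lambda>b. Q b t) ` \<Phi>) = card (h -` {c t})"
      using card_image[OF injQ] finP crd by simp
    ultimately have "(\<lambda>b. Q b t) ` \<Phi> = h -` {c t}" using fin card_subset_eq by blast
    moreover have "p t \<in> h -` {c t}" using p t by auto
    ultimately obtain b0 where b0: "b0 \<in> \<Phi>" "Q b0 t = p t" by force
    have sub: "{x \<in> {0..T}. t \<le> x} \<subseteq> {0..l} \<inter> cball T (E b0)" using J[OF b0(1)] by auto
    have "continuous_on {0..T} (\<lambda>s. if s \<le> t then p s else Q b0 s)"
    proof (rule continuous_on_cases_le[where h="\<lambda>x. x"])
      show "continuous_on {x \<in> {0..T}. x \<le> t} p"
        by (rule continuous_on_subset[OF p(1)]) auto
      show "continuous_on {x \<in> {0..T}. t \<le> x} (Q b0)"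
        using continuous_on_subset EQ b0(1) sub by blast
    qed (use b0 in \<open>auto intro: continuous_intros\<close>)
    moreover have "\<forall>s\<in>{0..T}. h (if s \<le> t then p s else Q b0 s) = c s"
    proof
      fix s assume s: "s \<in> {0..T}"
      show "h (if s \<le> t then p s else Q b0 s) = c s"
      proof (cases "s \<le> t")
        case True then show ?thesis using p(3) s by auto
      next
        case False then have "s \<in> {0..l} \<inter> cball T (E b0)" using sub s by auto
        then show ?thesis using EQ b0(1) False by auto
      qed
    qed
    ultimately show "P T" unfolding P_def using p(2) t(1) by (intro exI[of _ "\<lambda>s. if s \<le> t then p s else Q b0 s"]) auto
  qed
  define S where "S = {t\<in>{0..l}. P t}"
  define T where "T = Sup S"
  have S0: "0 \<in> S" using P0 l by (auto simp: S_def)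
  have bdd: "bdd_above S" by (auto simp: S_def bdd_above_def)
  have T0: "0 \<le> T" using cSup_upper[OF S0 bdd] by (simp add: T_def)
  have Tl: "T \<le> l" unfolding T_def using S0 by (intro cSup_least) (auto simp: S_def)
  have below: "\<forall>t. 0 \<le> t \<and> t < T \<longrightarrow> P t"
  proof (intro allI impI)
    fix t assume t: "0 \<le> t \<and> t < T"
    then obtain t' where "t' \<in> S" "t < t'" using less_cSup_iff[of S t] S0 bdd by (auto simp: T_def)
    then show "P t" using Pdown t by (auto simp: S_def)
  qed
  have PT: "P T"
  proof (cases "T = 0")
    case True then show ?thesis using P0 by simp
  next
    case False then show ?thesis using closed[OF _ Tl below] T0 by simp
  qed
  have "T = l"
  proof (rule ccontr)
    assume "T \<noteq> l"
    then have "T < l" using Tl by simp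
    then obtain t' where "t' > T" "t' \<le> l" "P t'" using ext T0 PT by blast
    then have "t' \<in> S" using T0 by (auto simp: S_def)
    then have "t' \<le> T" using cSup_upper[OF _ bdd] by (simp add: T_def)
    then show False using \<open>t' > T\<close> by simp
  qed
  then show ?thesis using PT unfolding P_def by blast
qed

lemma lift_length:
  fixes p c :: "real \<Rightarrow> 'y"
  assumes pc: "continuous_on {0..l} p" and l: "0 \<le> l" and hp: "\<forall>s\<in>{0..l}. h (p s) = c s"
    and c1: "\<forall>s\<in>{0..l}. \<forall>t\<in>{0..l}. dist (c s) (c t) \<le> \<bar>s - t\<bar>"
    and B: "\<forall>s\<in>{0..l}. Lx (p s) \<le> B" and B0: "0 \<le> B"
  shows "dist (p 0) (p l) \<le> B * l"
proof (cases "l = 0")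
  case True then show ?thesis by simp
next
  case False
  then have lpos: "l > 0" using l by simp
  have "\<forall>b. \<exists>e. e > 0 \<and> (\<forall>b1\<in>ball b e. \<forall>b2\<in>ball b e. dist b1 b2 \<le> Lx b * dist (h b1) (h b2))"
    using inj_loc by blast
  then obtain e where e: "\<forall>b. e b > 0 \<and> (\<forall>b1\<in>ball b (e b). \<forall>b2\<in>ball b (e b). dist b1 b2 \<le> Lx b * dist (h b1) (h b2))"
    by (rule choice[THEN exE]) blast
  have "\<forall>s. \<exists>\<delta>. s \<in> {0..l} \<longrightarrow> \<delta> > 0 \<and> (\<forall>u\<in>{0..l}. dist u s < \<delta> \<longrightarrow> dist (p u) (p s) < e (p s))"
  proof
    fix s
    show "\<exists>\<delta>. s \<in> {0..l} \<longrightarrow> \<delta> > 0 \<and> (\<forall>u\<in>{0..l}. dist u s < \<delta> \<longrightarrow> dist (p u) (p s) < e (p s))"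
    proof (cases "s \<in> {0..l}")
      case True
      then show ?thesis using pc e unfolding continuous_on_iff by blast
    qed auto
  qed
  then obtain \<delta> where \<delta>: "\<forall>s. s \<in> {0..l} \<longrightarrow> \<delta> s > 0 \<and> (\<forall>u\<in>{0..l}. dist u s < \<delta> s \<longrightarrow> dist (p u) (p s) < e (p s))"
    by (rule choice[THEN exE]) blast
  obtain \<eta> where \<eta>: "0 < \<eta>" "\<And>T. \<lbrakk>T \<subseteq> {0..l}; diameter T < \<eta>\<rbrakk> \<Longrightarrow> \<exists>B \<in> (\<lambda>s. ball s (\<delta> s)) ` {0..l}. T \<subseteq> B"
  proof (rule Lebesgue_number_lemma[of "{0..l}" "(\<lambda>s. ball s (\<delta> s)) ` {0..l}"])
    show "{0..l} \<subseteq> \<Union> ((\<lambda>s. ball s (\<delta> s)) ` {0..l})"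
    proof
      fix s assume "s \<in> {0..l}"
      then show "s \<in> \<Union> ((\<lambda>s. ball s (\<delta> s)) ` {0..l})" using \<delta> by force
    qed
  qed (use l in auto)
  obtain N :: nat where N: "l / \<eta> < real N" using reals_Archimedean2 by blast
  have Npos: "real N > 0" using N lpos \<eta>(1) by (smt (verit) divide_pos_pos)
  define t where "t k = real k * l / real N" for k :: nat
  have step: "l / real N < \<eta>" using N Npos \<eta>(1) lpos by (simp add: field_simps)
  have main: "k \<le> N \<Longrightarrow> dist (p 0) (p (t k)) \<le> B * t k" for k
  proof (induction k)
    case 0 then show ?case by (simp add: t_def)
  next
    case (Suc k)
    have kN: "real (Suc k) \<le> real N" using Suc.prems by linarith
    have a1: "0 \<le> real k * l" using lpos by simp
    have a2: "real k * l \<le> real (Suc k) * l" using lpos by (intro mult_right_mono) auto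
    have a3: "real (Suc k) * l \<le> real N * l" using kN lpos by (intro mult_right_mono) auto
    have tk: "t k \<in> {0..l}" "t (Suc k) \<in> {0..l}" "t k \<le> t (Suc k)"
      using a1 a2 a3 Npos by (auto simp: t_def field_simps)
    have tdiff: "t (Suc k) - t k = l / real N" by (simp add: t_def add_divide_distrib algebra_simps)
    have sub: "{t k..t (Suc k)} \<subseteq> {0..l}" using tk by auto
    have "diameter {t k..t (Suc k)} < \<eta>" using tk tdiff step by simp
    then obtain s where s: "s \<in> {0..l}" "{t k..t (Suc k)} \<subseteq> ball s (\<delta> s)"
      using \<eta>(2)[OF sub] by blast
    have "t k \<in> ball s (\<delta> s)" "t (Suc k) \<in> ball s (\<delta> s)" using s(2) tk by auto
    then have "dist (p (t k)) (p s) < e (p s)" "dist (p (t (Suc k))) (p s) < e (p s)"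
      using \<delta> s(1) tk by (auto simp: dist_commute)
    then have "p (t k) \<in> ball (p s) (e (p s))" "p (t (Suc k)) \<in> ball (p s) (e (p s))"
      by (auto simp: dist_commute)
    then have "dist (p (t k)) (p (t (Suc k))) \<le> Lx (p s) * dist (h (p (t k))) (h (p (t (Suc k))))"
      using e by blast
    also have "\<dots> = Lx (p s) * dist (c (t k)) (c (t (Suc k)))" using hp tk by simp
    also have "\<dots> \<le> B * dist (c (t k)) (c (t (Suc k)))"
      using B s(1) by (intro mult_right_mono) auto
    also have "\<dots> \<le> B * (l / real N)"
    proof (rule mult_left_mono[OF _ B0])
      have "dist (c (t k)) (c (t (Suc k))) \<le> \<bar>t k - t (Suc k)\<bar>" using c1 tk by blast
      then show "dist (c (t k)) (c (t (Suc k))) \<le> l / real N" using tk(3) tdiff by simp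
    qed
    finally have d1: "dist (p (t k)) (p (t (Suc k))) \<le> B * (l / real N)" .
    have "dist (p 0) (p (t (Suc k))) \<le> dist (p 0) (p (t k)) + dist (p (t k)) (p (t (Suc k)))"
      by (rule dist_triangle)
    also have "\<dots> \<le> B * t k + B * (l / real N)" using Suc d1 by simp
    also have "\<dots> = B * t (Suc k)" using tdiff by (simp add: algebra_simps)
    finally show ?case .
  qed
  have "t N = l" using Npos by (simp add: t_def)
  then show ?thesis using main[of N] by simp
qed

end

lemma holder_bound:
  fixes D :: "'a \<Rightarrow> 'a \<Rightarrow> real"
  assumes H: "holder \<alpha> D u" and Dp: "\<And>a b. a \<noteq> b \<Longrightarrow> D a b > 0" and D0: "\<And>a. D a a = 0"
  shows "\<bar>u a - u b\<bar> \<le> holder_semi \<alpha> D u * D a b powr \<alpha>"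
proof (cases "a = b")
  case True then show ?thesis using D0 by simp
next
  case False
  obtain C where C: "\<And>a b. \<bar>u a - u b\<bar> \<le> C * D a b powr \<alpha>" using H unfolding holder_def by blast
  define S where "S = insert 0 {\<bar>u a - u b\<bar> / D a b powr \<alpha> | a b. a \<noteq> b}"
  have "bdd_above S" unfolding bdd_above_def
  proof (intro exI[of _ "max 0 C"] ballI)
    fix r assume "r \<in> S"
    then consider "r = 0" | a b where "a \<noteq> b" "r = \<bar>u a - u b\<bar> / D a b powr \<alpha>" unfolding S_def by blast
    then show "r \<le> max 0 C"
    proof cases
      case 2
      have "D a b powr \<alpha> > 0" using Dp[OF 2(1)] by simp
      then have "r \<le> C" using C[of a b] 2(2) by (simp add: divide_le_eq)
      then show ?thesis by simp
    qed simp
  qed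
  moreover have "\<bar>u a - u b\<bar> / D a b powr \<alpha> \<in> S" using False unfolding S_def by blast
  ultimately have "\<bar>u a - u b\<bar> / D a b powr \<alpha> \<le> Sup S" by (rule cSup_upper[rotated])
  moreover have "D a b powr \<alpha> > 0" using Dp[OF False] by simp
  ultimately show ?thesis unfolding holder_semi_def S_def[symmetric] by (simp add: divide_le_eq)
qed

lemma semi_le:
  fixes D :: "'a \<Rightarrow> 'a \<Rightarrow> real"
  assumes Dp: "\<And>a b. a \<noteq> b \<Longrightarrow> D a b > 0" and M: "M \<ge> 0"
    and B: "\<And>a b. a \<noteq> b \<Longrightarrow> \<bar>u a - u b\<bar> \<le> M * D a b powr \<alpha>"
  shows "holder_semi \<alpha> D u \<le> M"
  unfolding holder_semi_def
proof (rule cSup_least)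
  fix r assume "r \<in> insert 0 {\<bar>u a - u b\<bar> / D a b powr \<alpha> | a b. a \<noteq> b}"
  then consider "r = 0" | a b where "a \<noteq> b" "r = \<bar>u a - u b\<bar> / D a b powr \<alpha>" by blast
  then show "r \<le> M"
  proof cases
    case 2
    have "D a b powr \<alpha> > 0" using Dp[OF 2(1)] by simp
    then show ?thesis using B[OF 2(1)] 2(2) by (simp add: divide_le_eq)
  qed (use M in simp)
qed simp

lemma in_cone:
  fixes u :: "'y::metric_space \<Rightarrow> real"
  assumes K: "K \<ge> 0" and c: "c > 0" and lo: "\<And>y. c \<le> u y"
    and B: "\<And>a b. \<bar>u a - u b\<bar> \<le> K * c * dist a b powr \<alpha>"
  shows "u \<in> hcone \<alpha> K"
proof -
  have pos: "\<forall>y. 0 < u y" using lo c by (meson less_le_trans)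
  have hol: "holder \<alpha> dist u" unfolding holder_def using B by blast
  have "holder_semi \<alpha> dist u \<le> K * c"
    by (rule semi_le) (use K c B in auto)
  also have "K * c \<le> K * Inf (range u)"
  proof (rule mult_left_mono[OF _ K])
    show "c \<le> Inf (range u)" by (rule cInf_greatest) (use lo in auto)
  qed
  finally show ?thesis unfolding hcone_def using pos hol by blast
qed

lemma cone_facts:
  fixes \<psi> :: "'y::metric_space \<Rightarrow> real"
  assumes C: "\<psi> \<in> hcone \<alpha> K" and nz: "\<psi> \<noteq> (\<lambda>_. 0)" and K: "K \<ge> 0" and al: "\<alpha> > 0"
    and bd: "bounded (UNIV::'y set)"
  shows "\<forall>y. \<psi> y > 0" "\<forall>a b. \<bar>\<psi> a - \<psi> b\<bar> \<le> K * Inf (range \<psi>) * dist a b powr \<alpha>"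
    "Inf (range \<psi>) > 0" "\<forall>y. Inf (range \<psi>) \<le> \<psi> y"
    "\<forall>y. \<psi> y \<le> Inf (range \<psi>) + K * Inf (range \<psi>) * diameter (UNIV::'y set) powr \<alpha>"
proof -
  define m where "m = Inf (range \<psi>)"
  define Dm where "Dm = diameter (UNIV::'y set)"
  have P: "\<forall>y. 0 < \<psi> y" "holder \<alpha> dist \<psi>" "holder_semi \<alpha> dist \<psi> \<le> K * m"
    using C nz unfolding hcone_def m_def by auto
  show "\<forall>y. \<psi> y > 0" using P by blast
  have bb: "bdd_below (range \<psi>)" using P(1) unfolding bdd_below_def by (intro exI[of _ 0]) (auto intro: less_imp_le)
  have lo: "\<forall>y. m \<le> \<psi> y" unfolding m_def using bb by (auto intro: cInf_lower)
  then show "\<forall>y. Inf (range \<psi>) \<le> \<psi> y" by (simp add: m_def)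
  have m0: "0 \<le> m" unfolding m_def by (rule cInf_greatest) (use P(1) in \<open>auto intro: less_imp_le\<close>)
  have hb: "\<bar>\<psi> a - \<psi> b\<bar> \<le> K * m * dist a b powr \<alpha>" for a b
  proof -
    have "\<bar>\<psi> a - \<psi> b\<bar> \<le> holder_semi \<alpha> dist \<psi> * dist a b powr \<alpha>"
      by (rule holder_bound[OF P(2)]) auto
    also have "\<dots> \<le> K * m * dist a b powr \<alpha>" using P(3) by (intro mult_right_mono) auto
    finally show ?thesis .
  qed
  then show "\<forall>a b. \<bar>\<psi> a - \<psi> b\<bar> \<le> K * Inf (range \<psi>) * dist a b powr \<alpha>" by (simp add: m_def)
  have up: "\<psi> y \<le> m + K * m * Dm powr \<alpha>" for y
  proof -
    have "\<psi> y - K * m * Dm powr \<alpha> \<le> Inf (range \<psi>)"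
    proof (rule cInf_greatest)
      fix r assume "r \<in> range \<psi>"
      then obtain y0 where y0: "r = \<psi> y0" by blast
      have "dist y y0 \<le> Dm" unfolding Dm_def using bd by (rule diameter_bounded_bound) auto
      then have "dist y y0 powr \<alpha> \<le> Dm powr \<alpha>" using al by (intro powr_mono2) auto
      then have "K * m * dist y y0 powr \<alpha> \<le> K * m * Dm powr \<alpha>" using K m0 by (intro mult_left_mono) auto
      moreover have "\<psi> y - \<psi> y0 \<le> K * m * dist y y0 powr \<alpha>" using hb[of y y0] by simp
      ultimately show "\<psi> y - K * m * Dm powr \<alpha> \<le> r" using y0 by simp
    qed auto
    then show ?thesis by (simp add: m_def)
  qed
  then show "\<forall>y. \<psi> y \<le> Inf (range \<psi>) + K * Inf (range \<psi>) * diameter (UNIV::'y set) powr \<alpha>"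
    by (simp add: m_def Dm_def)
  show "Inf (range \<psi>) > 0"
  proof (rule ccontr)
    assume "\<not> Inf (range \<psi>) > 0"
    then have "m = 0" using m0 by (simp add: m_def)
    then have "\<psi> undefined \<le> 0" using up[of undefined] by simp
    then show False using P(1) by (meson not_less)
  qed
qed


lemma hilbert_bound:
  fixes u v :: "'y::metric_space \<Rightarrow> real"
  assumes u: "u \<in> hcone \<alpha> (\<zeta>*K)" "u \<noteq> (\<lambda>_. 0)" and v: "v \<in> hcone \<alpha> (\<zeta>*K)" "v \<noteq> (\<lambda>_. 0)"
    and K: "K > 0" and z: "0 < \<zeta>" "\<zeta> < 1" and al: "\<alpha> > 0" and bd: "bounded (UNIV::'y set)"
  shows "hilbert_metric (hcone \<alpha> K) u v
           \<le> ereal (2 * ln ((1 + \<zeta> + \<zeta>*K*diameter (UNIV::'y set) powr \<alpha>) / (1 - \<zeta>)))"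
proof -
  define D' where "D' = diameter (UNIV::'y set) powr \<alpha>"
  define R where "R = 1 + \<zeta> + \<zeta>*K*D'"
  define C :: "('y \<Rightarrow> real) set" where "C = hcone \<alpha> K"
  have D'0: "D' \<ge> 0" by (simp add: D'_def)
  have zK: "\<zeta> * K \<ge> 0" using z K by simp
  note fu = cone_facts[OF u zK al bd] and fv = cone_facts[OF v zK al bd]
  define mu where "mu = Inf (range u)"
  define mv where "mv = Inf (range v)"
  have mu: "mu > 0" "\<forall>y. mu \<le> u y" "\<forall>y. u y \<le> mu * (1 + \<zeta>*K*D')" "\<forall>a b. \<bar>u a - u b\<bar> \<le> \<zeta>*K*mu*dist a b powr \<alpha>"
  proof -
    show "mu > 0" using fu(3) by (simp add: mu_def)
    show "\<forall>y. mu \<le> u y" using fu(4) by (simp add: mu_def)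
    show "\<forall>a b. \<bar>u a - u b\<bar> \<le> \<zeta>*K*mu*dist a b powr \<alpha>" using fu(2) by (simp add: mu_def)
    have "mu * (1 + \<zeta>*K*D') = mu + \<zeta>*K*mu*D'" by (simp add: algebra_simps)
    then show "\<forall>y. u y \<le> mu * (1 + \<zeta>*K*D')" using fu(5) by (simp add: mu_def D'_def)
  qed
  have mv: "mv > 0" "\<forall>y. mv \<le> v y" "\<forall>y. v y \<le> mv * (1 + \<zeta>*K*D')" "\<forall>a b. \<bar>v a - v b\<bar> \<le> \<zeta>*K*mv*dist a b powr \<alpha>"
  proof -
    show "mv > 0" using fv(3) by (simp add: mv_def)
    show "\<forall>y. mv \<le> v y" using fv(4) by (simp add: mv_def)
    show "\<forall>a b. \<bar>v a - v b\<bar> \<le> \<zeta>*K*mv*dist a b powr \<alpha>" using fv(2) by (simp add: mv_def)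
    have "mv * (1 + \<zeta>*K*D') = mv + \<zeta>*K*mv*D'" by (simp add: algebra_simps)
    then show "\<forall>y. v y \<le> mv * (1 + \<zeta>*K*D')" using fv(5) by (simp add: mv_def D'_def)
  qed
  have zKD: "\<zeta>*K*D' \<ge> 0" using z K D'0 by simp
  have Rpos: "R > 0" using z zKD unfolding R_def by linarith
  define t0 where "t0 = (1-\<zeta>) * mv / (mu * R)"
  define t1 where "t1 = mv * R / (mu * (1-\<zeta>))"
  have t0pos: "t0 > 0" using z mu mv Rpos by (simp add: t0_def)
  have t1pos: "t1 > 0" using z mu mv Rpos by (simp add: t1_def)
  have t0id: "t0 * mu * R = (1-\<zeta>) * mv" using mu Rpos by (simp add: t0_def)
  have t1id: "t1 * mu * (1-\<zeta>) = mv * R" using mu z by (simp add: t1_def)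
  define c0 where "c0 = \<zeta> * (mv + t0 * mu)"
  define c1 where "c1 = \<zeta> * (t1 * mu + mv)"
  have c0pos: "c0 > 0" unfolding c0_def using z(1) mv(1) mu(1) t0pos by (intro mult_pos_pos add_pos_pos) auto
  have c1pos: "c1 > 0" unfolding c1_def using z(1) mv(1) mu(1) t1pos by (intro mult_pos_pos add_pos_pos) auto
  have c0eq: "c0 = mv - t0 * mu * (1 + \<zeta>*K*D')"
  proof -
    have c0x: "c0 = \<zeta>*mv + \<zeta>*(t0*mu)" by (simp add: c0_def distrib_left)
    have e1: "t0 * mu * (1 + \<zeta>*K*D') = t0*mu*R - \<zeta>*(t0*mu)" by (simp add: R_def algebra_simps)
    have e2: "t0*mu*R = mv - \<zeta>*mv" using t0id by (simp add: algebra_simps)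
    show ?thesis using c0x e1 e2 by linarith
  qed
  have c1eq: "c1 = t1 * mu - mv * (1 + \<zeta>*K*D')"
  proof -
    have c1x: "c1 = \<zeta>*(t1*mu) + \<zeta>*mv" by (simp add: c1_def distrib_left)
    have e1: "mv * (1 + \<zeta>*K*D') = mv*R - \<zeta>*mv" by (simp add: R_def algebra_simps)
    have e2: "mv*R = t1*mu - \<zeta>*(t1*mu)" using t1id by (simp add: algebra_simps)
    show ?thesis using c1x e1 e2 by linarith
  qed
  have in0: "(\<lambda>y. v y - t0 * u y) \<in> C" unfolding C_def
  proof (rule in_cone[of K c0])
    show "0 \<le> K" using K by simp
    show "0 < c0" by (rule c0pos)
    fix y
    have "t0 * u y \<le> t0 * (mu * (1 + \<zeta>*K*D'))" using mu(3) t0pos by (intro mult_left_mono) auto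
    then show "c0 \<le> v y - t0 * u y" using mv(2)[rule_format, of y] c0eq by (simp add: algebra_simps)
  next
    fix a b
    have e1: "(v a - t0 * u a) - (v b - t0 * u b) = (v a - v b) - t0 * (u a - u b)" by (simp add: algebra_simps)
    have e2: "\<bar>t0 * (u a - u b)\<bar> = t0 * \<bar>u a - u b\<bar>" using t0pos by (simp add: abs_mult)
    have "\<bar>(v a - t0 * u a) - (v b - t0 * u b)\<bar> \<le> \<bar>v a - v b\<bar> + \<bar>t0 * (u a - u b)\<bar>"
      unfolding e1 by (rule abs_triangle_ineq4)
    then have "\<bar>(v a - t0 * u a) - (v b - t0 * u b)\<bar> \<le> \<bar>v a - v b\<bar> + t0 * \<bar>u a - u b\<bar>"
      using e2 by simp
    also have "\<dots> \<le> \<zeta>*K*mv*dist a b powr \<alpha> + t0 * (\<zeta>*K*mu*dist a b powr \<alpha>)"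
      using mu(4) mv(4) t0pos by (intro add_mono mult_left_mono) auto
    also have "\<dots> = K * c0 * dist a b powr \<alpha>" by (simp add: c0_def algebra_simps)
    finally show "\<bar>(v a - t0 * u a) - (v b - t0 * u b)\<bar> \<le> K * c0 * dist a b powr \<alpha>" .
  qed
  have in1: "(\<lambda>y. t1 * u y - v y) \<in> C" unfolding C_def
  proof (rule in_cone[of K c1])
    show "0 \<le> K" using K by simp
    show "0 < c1" by (rule c1pos)
    fix y
    have "t1 * mu \<le> t1 * u y" using mu(2) t1pos by (intro mult_left_mono) auto
    then show "c1 \<le> t1 * u y - v y" using mv(3)[rule_format, of y] c1eq by (simp add: algebra_simps)
  next
    fix a b
    have e1: "(t1 * u a - v a) - (t1 * u b - v b) = t1 * (u a - u b) - (v a - v b)" by (simp add: algebra_simps)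
    have e2: "\<bar>t1 * (u a - u b)\<bar> = t1 * \<bar>u a - u b\<bar>" using t1pos by (simp add: abs_mult)
    have "\<bar>(t1 * u a - v a) - (t1 * u b - v b)\<bar> \<le> \<bar>t1 * (u a - u b)\<bar> + \<bar>v a - v b\<bar>"
      unfolding e1 by (rule abs_triangle_ineq4)
    then have "\<bar>(t1 * u a - v a) - (t1 * u b - v b)\<bar> \<le> t1 * \<bar>u a - u b\<bar> + \<bar>v a - v b\<bar>"
      using e2 by simp
    also have "\<dots> \<le> t1 * (\<zeta>*K*mu*dist a b powr \<alpha>) + \<zeta>*K*mv*dist a b powr \<alpha>"
      using mu(4) mv(4) t1pos by (intro add_mono mult_left_mono) auto
    also have "\<dots> = K * c1 * dist a b powr \<alpha>" by (simp add: c1_def algebra_simps)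
    finally show "\<bar>(t1 * u a - v a) - (t1 * u b - v b)\<bar> \<le> K * c1 * dist a b powr \<alpha>" .
  qed
  define y0 :: 'y where "y0 = undefined"
  have u0: "u y0 > 0" using fu(1) by blast
  have v0: "v y0 > 0" using fv(1) by blast
  have Cnn: "w y0 \<ge> 0" if "w \<in> C \<union> {\<lambda>_. 0}" for w
    using that unfolding C_def hcone_def by (auto intro: less_imp_le)
  define A where "A = cone_A C u v"
  define B where "B = cone_B C u v"
  have A1: "ereal t0 \<le> A" unfolding A_def cone_A_def
    by (rule Sup_upper) (use t0pos in0 in \<open>auto simp: cone_le_def\<close>)
  have A2: "A \<le> ereal (v y0 / u y0)" unfolding A_def cone_A_def
  proof (rule Sup_least)
    fix r assume "r \<in> ereal ` {t. 0 < t \<and> cone_le C (\<lambda>y. t * u y) v}"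
    then obtain t where t: "r = ereal t" "cone_le C (\<lambda>y. t * u y) v" by blast
    have "v y0 - t * u y0 \<ge> 0" using Cnn[of "\<lambda>y. v y - t * u y"] t(2) unfolding cone_le_def by auto
    then show "r \<le> ereal (v y0 / u y0)" using t(1) u0 by (simp add: le_divide_eq)
  qed
  have B1: "B \<le> ereal t1" unfolding B_def cone_B_def
    by (rule Inf_lower) (use t1pos in1 in \<open>auto simp: cone_le_def\<close>)
  have B2: "ereal (v y0 / u y0) \<le> B" unfolding B_def cone_B_def
  proof (rule Inf_greatest)
    fix r assume "r \<in> ereal ` {t. 0 < t \<and> cone_le C v (\<lambda>y. t * u y)}"
    then obtain t where t: "r = ereal t" "cone_le C v (\<lambda>y. t * u y)" by blast
    have "t * u y0 - v y0 \<ge> 0" using Cnn[of "\<lambda>y. t * u y - v y"] t(2) unfolding cone_le_def by auto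
    then show "ereal (v y0 / u y0) \<le> r" using t(1) u0 by (simp add: divide_le_eq)
  qed
  obtain a where a: "A = ereal a" using A1 A2 by (cases A) auto
  obtain b where b: "B = ereal b" using B1 B2 by (cases B) auto
  have apos: "a \<ge> t0" using A1 a by simp
  have bpos: "b > 0"
  proof -
    have "v y0 / u y0 \<le> b" using B2 b by simp
    moreover have "v y0 / u y0 > 0" using u0 v0 by simp
    ultimately show ?thesis by linarith
  qed
  have bt1: "b \<le> t1" using B1 b by simp
  have "hilbert_metric C u v = ereal (ln (b / a))"
    unfolding hilbert_metric_def A_def[symmetric] B_def[symmetric] Let_def
    using a b apos t0pos bpos by simp
  moreover have "ln (b / a) \<le> ln (t1 / t0)"
  proof -
    have "b / a \<le> t1 / t0" using bt1 apos t0pos bpos by (simp add: frac_le)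
    then show ?thesis using bpos apos t0pos t1pos by (subst ln_le_cancel_iff) auto
  qed
  moreover have "ln (t1 / t0) = 2 * ln (R / (1 - \<zeta>))"
  proof -
    have p: "0 < 1 - \<zeta>" "0 < mu" "0 < mv" "0 < R" using z mu mv Rpos by auto
    have q1: "ln (t1 / t0) = ln t1 - ln t0" using t0pos t1pos by (simp add: ln_div)
    have q2: "ln t1 = ln mv + ln R - (ln mu + ln (1 - \<zeta>))"
      unfolding t1_def using p by (simp add: ln_div ln_mult)
    have q3: "ln t0 = ln (1 - \<zeta>) + ln mv - (ln mu + ln R)"
      unfolding t0_def using p by (simp add: ln_div ln_mult)
    have q4: "ln (R / (1 - \<zeta>)) = ln R - ln (1 - \<zeta>)" using p by (simp add: ln_div)
    show ?thesis using q1 q2 q3 q4 by linarith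
  qed
  ultimately have "hilbert_metric C u v \<le> ereal (2 * ln (R / (1 - \<zeta>)))" by simp
  then show ?thesis by (simp only: C_def R_def D'_def)
qed


lemma dist_same_fst: "dist (x::'a::metric_space, a::'b::metric_space) (x, b) = dist a b"
  by (simp add: dist_Pair_Pair)

lemma pdist_same_fst: "pdist (x, a) (x, b) = dist a b"
  by (simp add: pdist_def)

lemma expand_eq:
  fixes f :: "'x::metric_space \<Rightarrow> 'x"
  assumes f_exp: "1 < \<gamma>" "\<forall>x x'. dist x x' \<le> \<delta>f \<longrightarrow> \<gamma> * dist x x' \<le> dist (f x) (f x')"
    and "dist x' x \<le> \<delta>f" "f x' = f x"
  shows "x' = x"
proof -
  have "\<gamma> * dist x' x \<le> 0" using f_exp(2) assms(3,4) by fastforce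
  then have "dist x' x \<le> 0" using f_exp(1) by (simp add: mult_le_0_iff)
  then show ?thesis by simp
qed

lemma fib_inst:
  fixes f :: "'x::metric_space \<Rightarrow> 'x" and g :: "'x \<Rightarrow> 'y::metric_space \<Rightarrow> 'y"
    and Lf :: "'x \<times> 'y \<Rightarrow> real"
  assumes F: "F = (\<lambda>(x, y). (f x, g x y))"
    and F_lh: "local_homeo F"
    and f_exp: "1 < \<gamma>" "0 < \<delta>f" "\<forall>x x'. dist x x' \<le> \<delta>f \<longrightarrow> \<gamma> * dist x x' \<le> dist (f x) (f x')"
    and g_deg: "\<forall>x y. finite {yb. g x yb = y} \<and> card {yb. g x yb = y} = d"
    and Lf_inv: "\<forall>z. \<exists>U. open U \<and> z \<in> U \<and> inj_on F U \<and>
                   (\<forall>w\<in>U. \<forall>w'\<in>U. pdist w w' \<le> Lf z * pdist (F w) (F w'))"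
  shows "fib (g x) (\<lambda>b. Lf (x, b)) d"
proof
  fix b
  obtain U where U: "open U" "(x, b) \<in> U" "inj_on F U"
    "\<forall>w\<in>U. \<forall>w'\<in>U. pdist w w' \<le> Lf (x, b) * pdist (F w) (F w')"
    using Lf_inv by blast
  obtain e where e: "e > 0" "ball (x, b) e \<subseteq> U" using U(1,2) open_contains_ball by blast
  have inb: "(x, b') \<in> U" if "b' \<in> ball b e" for b'
    using that e(2) by (auto simp: dist_same_fst)
  have "inj_on (g x) (ball b e)"
  proof (rule inj_onI)
    fix b1 b2 assume "b1 \<in> ball b e" "b2 \<in> ball b e" "g x b1 = g x b2"
    then have "F (x, b1) = F (x, b2)" "(x, b1) \<in> U" "(x, b2) \<in> U" using inb by (auto simp: F)
    then show "b1 = b2" using U(3) unfolding inj_on_def by blast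
  qed
  moreover have "\<forall>b1\<in>ball b e. \<forall>b2\<in>ball b e. dist b1 b2 \<le> Lf (x, b) * dist (g x b1) (g x b2)"
  proof (intro ballI)
    fix b1 b2 assume "b1 \<in> ball b e" "b2 \<in> ball b e"
    then have "pdist (x, b1) (x, b2) \<le> Lf (x, b) * pdist (F (x, b1)) (F (x, b2))" using U(4) inb by blast
    then show "dist b1 b2 \<le> Lf (x, b) * dist (g x b1) (g x b2)" by (simp add: F pdist_def)
  qed
  ultimately show "\<exists>e>0. inj_on (g x) (ball b e) \<and>
      (\<forall>b1\<in>ball b e. \<forall>b2\<in>ball b e. dist b1 b2 \<le> Lf (x, b) * dist (g x b1) (g x b2))" using e(1) by blast
next
  fix b
  obtain U G where UG: "open U" "(x, b) \<in> U" "open (F ` U)" "homeomorphism U (F ` U) F G"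
    using F_lh unfolding local_homeo_def by blast
  have hom: "\<forall>w\<in>U. G (F w) = w" "\<forall>v\<in>F ` U. F (G v) = v" "continuous_on (F ` U) G" "G ` (F ` U) = U"
    using UG(4) unfolding homeomorphism_def by auto
  have Fz: "F (x, b) = (f x, g x b)" by (simp add: F)
  obtain e1 where e1: "e1 > 0" "ball (F (x, b)) e1 \<subseteq> F ` U" using UG(2,3) open_contains_ball by blast
  obtain e2 where e2: "e2 > 0" "\<forall>v\<in>F ` U. dist v (F (x, b)) < e2 \<longrightarrow> dist (G v) (G (F (x, b))) < \<delta>f"
    using hom(3) UG(2) f_exp(2) unfolding continuous_on_iff by blast
  define e where "e = min e1 e2"
  define G' where "G' v = snd (G (f x, v))" for v
  have inFU: "(f x, v) \<in> F ` U" if "v \<in> ball (g x b) e" for v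
  proof -
    have "dist (F (x, b)) (f x, v) < e1" using that by (simp add: Fz dist_same_fst e_def)
    then show ?thesis using e1(2) by auto
  qed
  have Gv: "G (f x, v) = (x, G' v)" if v: "v \<in> ball (g x b) e" for v
  proof -
    have "dist (f x, v) (F (x, b)) < e2" using v by (simp add: Fz dist_same_fst e_def dist_commute)
    then have "dist (G (f x, v)) (x, b) < \<delta>f" using e2(2) inFU[OF v] hom(1) UG(2) by fastforce
    then have d1: "dist (fst (G (f x, v))) x \<le> \<delta>f"
      using dist_fst_le[of "G (f x, v)" "(x, b)"] by simp
    have "F (G (f x, v)) = (f x, v)" using hom(2) inFU[OF v] by blast
    then have "f (fst (G (f x, v))) = f x" by (simp add: F split: prod.splits)
    then have "fst (G (f x, v)) = x" using expand_eq[OF f_exp(1) f_exp(3) d1] by blast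
    then show ?thesis unfolding G'_def by (metis prod.collapse)
  qed
  have "continuous_on (ball (g x b) e) G'"
  proof -
    have "continuous_on (ball (g x b) e) (\<lambda>v. (f x, v))" by (intro continuous_intros)
    then have "continuous_on (ball (g x b) e) (\<lambda>v. G (f x, v))"
      by (rule continuous_on_compose2[OF hom(3)]) (use inFU in auto)
    then show ?thesis unfolding G'_def by (intro continuous_intros)
  qed
  moreover have "G' (g x b) = b"
  proof -
    have "G (f x, g x b) = (x, b)" using hom(1) UG(2) Fz by metis
    then show ?thesis by (simp add: G'_def)
  qed
  moreover have "\<forall>v\<in>ball (g x b) e. g x (G' v) = v"
  proof
    fix v assume v: "v \<in> ball (g x b) e"
    have "F (G (f x, v)) = (f x, v)" using hom(2) inFU[OF v] by blast
    then show "g x (G' v) = v" using Gv[OF v] by (simp add: F)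
  qed
  moreover have "e > 0" using e1 e2 by (simp add: e_def)
  ultimately show "\<exists>e>0. \<exists>G. continuous_on (ball (g x b) e) G \<and> G (g x b) = b \<and> (\<forall>v\<in>ball (g x b) e. g x (G v) = v)"
    by blast
next
  fix y
  have "g x -` {y} = {yb. g x yb = y}" by auto
  then show "finite (g x -` {y})" "card (g x -` {y}) = d" using g_deg by auto
qed

lemma clopen_lift:
  fixes f :: "'x::metric_space \<Rightarrow> 'x" and g :: "'x \<Rightarrow> 'y::metric_space \<Rightarrow> 'y"
    and Lf :: "'x \<times> 'y \<Rightarrow> real" and cY p :: "real \<Rightarrow> 'y"
  assumes F: "F = (\<lambda>(x, y). (f x, g x y))"
    and fib: "fib (g x) (\<lambda>b. Lf (x, b)) d"
    and F_lip: "\<exists>C. \<forall>z w. pdist (F z) (F w) \<le> C * pdist z w"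
    and f_exp: "1 < \<gamma>" "0 < \<delta>f" "\<forall>x x'. dist x x' \<le> \<delta>f \<longrightarrow> \<gamma> * dist x x' \<le> dist (f x) (f x')"
    and geo: "min_geodesic dist cY l"
    and p: "continuous_on {0..l} p" "\<forall>s\<in>{0..l}. g x (p s) = cY s"
    and C: "C \<in> components (F -` ((\<lambda>s. (f x, cY s)) ` {0..l}))"
    and CK: "C \<inter> (\<lambda>s. (x, p s)) ` {0..l} \<noteq> {}"
  shows "C \<subseteq> (\<lambda>s. (x, p s)) ` {0..l}"
proof -
  define S where "S = F -` ((\<lambda>s. (f x, cY s)) ` {0..l})"
  define K where "K = (\<lambda>s. (x, p s)) ` {0..l}"
  have geo': "\<forall>s\<in>{0..l}. \<forall>t\<in>{0..l}. dist (cY s) (cY t) = \<bar>s - t\<bar>"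
    using geo unfolding min_geodesic_def by blast
  obtain C0 where C0: "\<forall>z w. pdist (F z) (F w) \<le> C0 * pdist z w" using F_lip by blast
  define C1 where "C1 = max C0 0 + 1"
  have C1: "C1 > 0" by (simp add: C1_def)
  have hlip: "dist (g x a) (g x a') \<le> C1 * dist a a'" for a a'
  proof -
    have "dist (g x a) (g x a') = pdist (F (x, a)) (F (x, a'))" by (simp add: F pdist_def)
    also have "\<dots> \<le> C0 * dist a a'" using C0 by (metis pdist_same_fst)
    also have "\<dots> \<le> C1 * dist a a'" by (intro mult_right_mono) (auto simp: C1_def)
    finally show ?thesis .
  qed
  have Kc: "compact K" unfolding K_def
    by (rule compact_continuous_image) (use p(1) in \<open>auto intro: continuous_intros\<close>)
  have KS: "K \<subseteq> S" using p(2) by (auto simp: K_def S_def F)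
  have Ko: "openin (top_of_set S) K"
    unfolding openin_euclidean_subtopology_iff
  proof (intro conjI ballI)
    show "K \<subseteq> S" by (rule KS)
  next
    fix w assume "w \<in> K"
    then obtain \<tau> where \<tau>: "\<tau> \<in> {0..l}" "w = (x, p \<tau>)" by (auto simp: K_def)
    obtain e0 where e0: "e0 > 0" "inj_on (g x) (ball (p \<tau>) e0)"
      using fib.inj_loc[OF fib] by blast
    obtain \<delta>1 where \<delta>1: "\<delta>1 > 0" "\<forall>s\<in>{0..l}. dist s \<tau> < \<delta>1 \<longrightarrow> dist (p s) (p \<tau>) < e0"
      using p(1) \<tau>(1) e0(1) unfolding continuous_on_iff by blast
    define e where "e = min \<delta>f (min e0 (\<delta>1 / C1))"
    have epos: "e > 0" using f_exp(2) e0(1) \<delta>1(1) C1 by (simp add: e_def)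
    show "\<exists>e>0. \<forall>w'\<in>S. dist w' w < e \<longrightarrow> w' \<in> K"
    proof (intro exI[of _ e] conjI ballI impI)
      show "e > 0" by (rule epos)
      fix w' assume w': "w' \<in> S" "dist w' w < e"
      obtain x' b' where xb: "w' = (x', b')" by (cases w')
      obtain s where s: "s \<in> {0..l}" "F w' = (f x, cY s)" using w'(1) by (auto simp: S_def)
      have fx: "f x' = f x" "g x' b' = cY s" using s(2) xb by (auto simp: F)
      have "dist x' x \<le> dist w' w" using dist_fst_le[of w' w] xb \<tau>(2) by simp
      then have "dist x' x \<le> \<delta>f" using w'(2) by (simp add: e_def)
      then have xx: "x' = x" using expand_eq[OF f_exp(1) f_exp(3)] fx(1) by blast
      have db: "dist b' (p \<tau>) < e" using dist_snd_le[of w' w] xb \<tau>(2) w'(2) by simp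
      have "\<bar>s - \<tau>\<bar> = dist (cY s) (cY \<tau>)" using geo' s(1) \<tau>(1) by simp
      also have "\<dots> = dist (g x b') (g x (p \<tau>))" using fx(2) xx p(2) \<tau>(1) by simp
      also have "\<dots> \<le> C1 * dist b' (p \<tau>)" by (rule hlip)
      also have "\<dots> < C1 * (\<delta>1 / C1)"
        using db C1 by (intro mult_strict_left_mono) (auto simp: e_def)
      also have "\<dots> = \<delta>1" using C1 by simp
      finally have "dist s \<tau> < \<delta>1" by (simp add: dist_real_def)
      then have "dist (p s) (p \<tau>) < e0" using \<delta>1(2) s(1) by blast
      then have "p s \<in> ball (p \<tau>) e0" by (simp add: dist_commute)
      moreover have "b' \<in> ball (p \<tau>) e0" using db by (simp add: e_def dist_commute)
      moreover have "g x b' = g x (p s)" using fx(2) xx p(2) s(1) by simp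
      ultimately have "b' = p s" using e0(2) unfolding inj_on_def by blast
      then show "w' \<in> K" using xb xx s(1) by (auto simp: K_def)
    qed
  qed
  have Csub: "C \<subseteq> S" "connected C"
    using in_components_subset[OF C] in_components_connected[OF C] unfolding S_def by auto
  obtain Op where Op: "open Op" "K = S \<inter> Op" using Ko unfolding openin_open by blast
  have "C \<inter> K = C \<inter> Op" using Op(2) Csub(1) by blast
  then have o1: "openin (top_of_set C) (C \<inter> K)" using Op(1) by (auto simp: openin_open)
  have c1: "closedin (top_of_set C) (C \<inter> K)" by (rule closedin_closed_Int) (use Kc compact_imp_closed in blast)
  have "C \<inter> K = {} \<or> C \<inter> K = C" using Csub(2) o1 c1 unfolding connected_clopen by blast
  then show ?thesis using CK unfolding K_def by blast
qed

lemma matching: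
  fixes f :: "'x::metric_space \<Rightarrow> 'x" and g :: "'x \<Rightarrow> 'y::metric_space \<Rightarrow> 'y"
    and Lf :: "'x \<times> 'y \<Rightarrow> real" and \<A> :: "('x \<times> 'y) set" and \<U> :: "('x \<times> 'y) set set"
  assumes F: "F = (\<lambda>(x, y). (f x, g x y))"
    and fib: "fib (g x) (\<lambda>b. Lf (x, b)) d"
    and F_lip: "\<exists>C. \<forall>z w. pdist (F z) (F w) \<le> C * pdist z w"
    and f_exp: "1 < \<gamma>" "0 < \<delta>f" "\<forall>x x'. dist x x' \<le> \<delta>f \<longrightarrow> \<gamma> * dist x x' \<le> dist (f x) (f x')"
    and Ygeo: "geodesic_space (dist :: 'y \<Rightarrow> 'y \<Rightarrow> real)"
    and A1: "1 \<le> L" "\<forall>z\<in>\<A>. Lf z \<le> L" "\<forall>z. z \<notin> \<A> \<longrightarrow> Lf z < 1 / \<gamma>"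
    and A2: "finite \<U>" "\<exists>\<V>\<subseteq>\<U>. card \<V> = q \<and> \<A> \<subseteq> \<Union>\<V>" "q < d"
            "\<forall>U\<in>\<U>. \<forall>c l. min_geodesic pdist c l \<longrightarrow>
                (\<forall>C1\<in>components (F -` (c ` {0..l})). \<forall>C2\<in>components (F -` (c ` {0..l})).
                   C1 \<inter> U \<noteq> {} \<longrightarrow> C2 \<inter> U \<noteq> {} \<longrightarrow> C1 = C2)"
    and alpha: "0 < \<alpha>"
  shows "\<exists>\<sigma>. bij_betw \<sigma> (g x -` {y}) (g x -` {y'}) \<and>
     (\<Sum>b\<in>g x -` {y}. dist b (\<sigma> b) powr \<alpha>)
        \<le> ((real d - real q) * \<gamma> powr (-\<alpha>) + real q * L powr \<alpha>) * dist y y' powr \<alpha>"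
proof -
  interpret fib "g x" "\<lambda>b. Lf (x, b)" d by (rule fib)
  obtain cY l where geo: "min_geodesic dist cY l" "cY 0 = y" "cY l = y'"
    using Ygeo unfolding geodesic_space_def by blast
  have l0: "0 \<le> l" using geo(1) unfolding min_geodesic_def by simp
  have geo': "\<forall>s\<in>{0..l}. \<forall>t\<in>{0..l}. dist (cY s) (cY t) = \<bar>s - t\<bar>"
    using geo unfolding min_geodesic_def by blast
  have ldist: "l = dist y y'" using geo' geo(2,3) l0 by force
  have cc: "continuous_on {0..l} cY"
    unfolding continuous_on_iff
  proof (intro ballI allI impI)
    fix s e :: real assume s: "s \<in> {0..l}" and e: "e > 0"
    show "\<exists>d>0. \<forall>t\<in>{0..l}. dist t s < d \<longrightarrow> dist (cY t) (cY s) < e"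
      using geo' s e by (intro exI[of _ e]) (auto simp: dist_real_def)
  qed
  define Pre where "Pre = g x -` {y}"
  define Pre' where "Pre' = g x -` {y'}"
  define LP where "LP b = (SOME p. continuous_on {0..l} p \<and> p 0 = b \<and> (\<forall>s\<in>{0..l}. g x (p s) = cY s))" for b
  have LP: "continuous_on {0..l} (LP b) \<and> LP b 0 = b \<and> (\<forall>s\<in>{0..l}. g x (LP b s) = cY s)" if "b \<in> Pre" for b
  proof -
    have "g x b = cY 0" using that geo(2) by (simp add: Pre_def)
    then have "\<exists>p. continuous_on {0..l} p \<and> p 0 = b \<and> (\<forall>s\<in>{0..l}. g x (p s) = cY s)"
      using lift_exists[OF cc l0] by blast
    then show ?thesis unfolding LP_def by (rule someI_ex)
  qed
  have LPu: "LP b1 s = LP b2 s" if "b1 \<in> Pre" "b2 \<in> Pre" "t0 \<in> {0..l}" "LP b1 t0 = LP b2 t0" "s \<in> {0..l}" for b1 b2 t0 s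
    using uniq[of "{0..l}" "LP b1" "LP b2" t0 s] LP that by auto
  define \<sigma> where "\<sigma> b = LP b l" for b
  have l_in: "l \<in> {0..l}" "0 \<in> {0..l}" using l0 by auto
  have \<sigma>in: "\<sigma> ` Pre \<subseteq> Pre'" using LP l_in geo(3) by (auto simp: \<sigma>_def Pre_def Pre'_def)
  have \<sigma>inj: "inj_on \<sigma> Pre"
  proof (rule inj_onI)
    fix b1 b2 assume b: "b1 \<in> Pre" "b2 \<in> Pre" "\<sigma> b1 = \<sigma> b2"
    have "LP b1 0 = LP b2 0" using LPu[OF b(1,2) l_in(1) _ l_in(2)] b(3) by (simp add: \<sigma>_def)
    then show "b1 = b2" using LP b(1,2) by auto
  qed
  have finP: "finite Pre" "card Pre = d" "finite Pre'" "card Pre' = d" using fin crd by (auto simp: Pre_def Pre'_def)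
  have bij: "bij_betw \<sigma> Pre Pre'"
    unfolding bij_betw_def
  proof
    show "inj_on \<sigma> Pre" by (rule \<sigma>inj)
    have "card (\<sigma> ` Pre) = card Pre'" using card_image[OF \<sigma>inj] finP by simp
    then show "\<sigma> ` Pre = Pre'" using card_subset_eq[OF finP(3) \<sigma>in] by simp
  qed
  define bad where "bad b \<longleftrightarrow> (\<exists>s\<in>{0..l}. (x, LP b s) \<in> \<A>)" for b
  have "1 / \<gamma> < 1" using f_exp(1) by simp
  then have gi: "1 / \<gamma> \<le> L" using A1(1) by linarith
  have ginv: "0 \<le> 1 / \<gamma>" using f_exp(1) by simp
  have dbound: "dist b (\<sigma> b) \<le> (if bad b then L else 1 / \<gamma>) * l" if b: "b \<in> Pre" for b
  proof -
    have Lb: "\<forall>s\<in>{0..l}. Lf (x, LP b s) \<le> (if bad b then L else 1 / \<gamma>)"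
    proof
      fix s assume s: "s \<in> {0..l}"
      show "Lf (x, LP b s) \<le> (if bad b then L else 1 / \<gamma>)"
      proof (cases "(x, LP b s) \<in> \<A>")
        case True
        then have "bad b" using s by (auto simp: bad_def)
        then show ?thesis using A1(2) True by simp
      next
        case False
        then have "Lf (x, LP b s) < 1 / \<gamma>" using A1(3) by blast
        then show ?thesis using gi by auto
      qed
    qed
    have "dist (LP b 0) (LP b l) \<le> (if bad b then L else 1 / \<gamma>) * l"
    proof (rule lift_length[of l "LP b" cY])
      show "continuous_on {0..l} (LP b)" using LP b by blast
      show "\<forall>s\<in>{0..l}. g x (LP b s) = cY s" using LP b by blast
      show "\<forall>s\<in>{0..l}. \<forall>t\<in>{0..l}. dist (cY s) (cY t) \<le> \<bar>s - t\<bar>" using geo' by simp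
      show "0 \<le> (if bad b then L else 1 / \<gamma>)" using A1(1) ginv by simp
    qed (use Lb l0 in auto)
    then show ?thesis using LP b by (simp add: \<sigma>_def)
  qed
  define Bad where "Bad = {b\<in>Pre. bad b}"
  have cardBad: "card Bad \<le> q"
  proof -
    obtain \<V> where V: "\<V> \<subseteq> \<U>" "card \<V> = q" "\<A> \<subseteq> \<Union>\<V>" using A2(2) by blast
    have finV: "finite \<V>" using V(1) A2(1) finite_subset by blast
    have "\<forall>b\<in>Bad. \<exists>sV. fst sV \<in> {0..l} \<and> snd sV \<in> \<V> \<and> (x, LP b (fst sV)) \<in> snd sV"
    proof
      fix b assume "b \<in> Bad"
      then obtain s where s: "s \<in> {0..l}" "(x, LP b s) \<in> \<A>" by (auto simp: Bad_def bad_def)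
      then obtain V where "V \<in> \<V>" "(x, LP b s) \<in> V" using V(3) by blast
      then show "\<exists>sV. fst sV \<in> {0..l} \<and> snd sV \<in> \<V> \<and> (x, LP b (fst sV)) \<in> snd sV"
        using s by (intro exI[of _ "(s, V)"]) simp
    qed
    then obtain sV where sV: "\<forall>b\<in>Bad. fst (sV b) \<in> {0..l} \<and> snd (sV b) \<in> \<V> \<and> (x, LP b (fst (sV b))) \<in> snd (sV b)"
      by metis
    define cc where "cc s = (f x, cY s)" for s
    have mg: "min_geodesic pdist cc l"
      using geo(1) unfolding min_geodesic_def cc_def by (simp add: pdist_def)
    define S where "S = F -` (cc ` {0..l})"
    have inj: "inj_on (\<lambda>b. snd (sV b)) Bad"
    proof (rule inj_onI)
      fix b1 b2 assume b: "b1 \<in> Bad" "b2 \<in> Bad" "snd (sV b1) = snd (sV b2)"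
      define V where "V = snd (sV b1)"
      define w1 where "w1 = (x, LP b1 (fst (sV b1)))"
      define w2 where "w2 = (x, LP b2 (fst (sV b2)))"
      have Pb: "b1 \<in> Pre" "b2 \<in> Pre" using b by (auto simp: Bad_def)
      have s1: "fst (sV b1) \<in> {0..l}" "w1 \<in> V" "V \<in> \<U>" using sV b(1) V(1) by (auto simp: w1_def V_def)
      have s2: "fst (sV b2) \<in> {0..l}" "w2 \<in> V" using sV b(2,3) by (auto simp: w2_def V_def)
      have wS: "w1 \<in> S" "w2 \<in> S" using s1 s2 LP Pb
        by (auto simp: S_def cc_def F w1_def w2_def)
      define C1 where "C1 = connected_component_set S w1"
      define C2 where "C2 = connected_component_set S w2"
      have Cc: "C1 \<in> components S" "C2 \<in> components S" unfolding components_iff C1_def C2_def using wS by blast+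
      have wC: "w1 \<in> C1" "w2 \<in> C2" using wS by (auto simp: C1_def C2_def)
      have "C1 = C2" using A2(4) s1(3) mg Cc wC s1(2) s2(2) unfolding S_def by blast
      moreover have "C1 \<subseteq> (\<lambda>s. (x, LP b1 s)) ` {0..l}"
      proof (rule clopen_lift[OF F fib F_lip f_exp geo(1)])
        show "continuous_on {0..l} (LP b1)" "\<forall>s\<in>{0..l}. g x (LP b1 s) = cY s" using LP Pb by auto
        show "C1 \<in> components (F -` ((\<lambda>s. (f x, cY s)) ` {0..l}))" using Cc unfolding S_def cc_def by simp
        show "C1 \<inter> (\<lambda>s. (x, LP b1 s)) ` {0..l} \<noteq> {}" using wC s1(1) by (auto simp: w1_def)
      qed
      ultimately obtain s where s: "s \<in> {0..l}" "w2 = (x, LP b1 s)" using wC(2) by blast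
      have "cY (fst (sV b2)) = cY s" using LP Pb s s2(1) unfolding w2_def by (metis prod.inject)
      then have "\<bar>fst (sV b2) - s\<bar> = 0" using geo' s(1) s2(1) by (metis dist_self)
      then have "fst (sV b2) = s" by simp
      then have "LP b2 s = LP b1 s" using s(2) by (simp add: w2_def)
      then have "LP b2 0 = LP b1 0" using LPu[OF Pb(2,1) s(1) _ l_in(2)] by simp
      then show "b1 = b2" using LP Pb by auto
    qed
    have "(\<lambda>b. snd (sV b)) ` Bad \<subseteq> \<V>" using sV by auto
    then have "card Bad \<le> card \<V>" using card_inj_on_le[OF inj] finV by blast
    then show ?thesis using V(2) by simp
  qed
  define u where "u = L powr \<alpha>"
  define v where "v = \<gamma> powr (-\<alpha>)"
  have vv: "(1 / \<gamma>) powr \<alpha> = v" using f_exp(1) by (simp add: v_def powr_minus_divide powr_divide)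
  have uv: "v \<le> u" unfolding u_def using vv gi ginv alpha by (metis powr_mono2 less_imp_le)
  have v0: "0 \<le> v" by (simp add: v_def)
  have trm: "dist b (\<sigma> b) powr \<alpha> \<le> (if bad b then u else v) * l powr \<alpha>" if b: "b \<in> Pre" for b
  proof -
    have "dist b (\<sigma> b) powr \<alpha> \<le> ((if bad b then L else 1 / \<gamma>) * l) powr \<alpha>"
      by (rule powr_mono2) (use dbound[OF b] alpha in simp_all)
    also have "\<dots> = (if bad b then L else 1 / \<gamma>) powr \<alpha> * l powr \<alpha>"
      by (rule powr_mult)
    also have "\<dots> = (if bad b then u else v) * l powr \<alpha>" using vv by (simp add: u_def)
    finally show ?thesis .
  qed
  have "(\<Sum>b\<in>Pre. dist b (\<sigma> b) powr \<alpha>) \<le> (\<Sum>b\<in>Pre. (if bad b then u else v) * l powr \<alpha>)"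
    using trm by (rule sum_mono)
  also have "\<dots> = (\<Sum>b\<in>Pre. (if bad b then u else v)) * l powr \<alpha>" by (simp add: sum_distrib_right)
  also have "(\<Sum>b\<in>Pre. (if bad b then u else v)) = real (card Bad) * u + real (card (Pre - Bad)) * v"
  proof -
    have "(\<Sum>b\<in>Pre. (if bad b then u else v)) = (\<Sum>b\<in>Pre \<inter> {b. bad b}. u) + (\<Sum>b\<in>Pre \<inter> - {b. bad b}. v)"
      by (rule sum.If_cases) (use finP in simp)
    moreover have "Pre \<inter> {b. bad b} = Bad" "Pre \<inter> - {b. bad b} = Pre - Bad" by (auto simp: Bad_def)
    ultimately show ?thesis by simp
  qed
  also have "real (card (Pre - Bad)) = real d - real (card Bad)"
  proof -
    have "Bad \<subseteq> Pre" by (auto simp: Bad_def)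
    then have "card (Pre - Bad) = card Pre - card Bad" using finP by (meson card_Diff_subset finite_subset)
    moreover have "card Bad \<le> card Pre" using card_mono[OF finP(1) \<open>Bad \<subseteq> Pre\<close>] .
    ultimately show ?thesis using finP by simp
  qed
  also have "real (card Bad) * u + (real d - real (card Bad)) * v \<le> (real d - real q) * v + real q * u"
  proof -
    have "real (card Bad) \<le> real q" using cardBad by simp
    then have "(real q - real (card Bad)) * (u - v) \<ge> 0" using uv by simp
    then show ?thesis by (simp add: algebra_simps)
  qed
  finally have "(\<Sum>b\<in>Pre. dist b (\<sigma> b) powr \<alpha>) \<le> ((real d - real q) * v + real q * u) * l powr \<alpha>"
    by (simp add: mult_right_mono)
  then show ?thesis using bij ldist unfolding Pre_def Pre'_def u_def v_def by blast
qed

lemma exp_lip: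
  fixes u v S :: real
  assumes "u \<le> S" "v \<le> S"
  shows "\<bar>exp u - exp v\<bar> \<le> exp S * \<bar>u - v\<bar>"
proof -
  have key: "exp a - exp b \<le> exp S * (a - b)" if ab: "b \<le> a" "a \<le> S" for a b :: real
  proof -
    have "1 + (b - a) \<le> exp (b - a)" by (rule exp_ge_add_one_self)
    then have "exp a * (1 + (b - a)) \<le> exp a * exp (b - a)" by (intro mult_left_mono) auto
    then have "exp a - exp b \<le> exp a * (a - b)" by (simp add: exp_diff algebra_simps)
    also have "\<dots> \<le> exp S * (a - b)" using ab by (intro mult_right_mono) auto
    finally show ?thesis .
  qed
  show ?thesis
  proof (cases "v \<le> u")
    case True
    then show ?thesis using key[of v u] assms by simp
  next
    case False
    then show ?thesis using key[of u v] assms by simp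
  qed
qed

lemma final_ineq:
  fixes m d \<epsilon> K X S0 a0 W s \<zeta> Da :: real
  assumes m: "m > 0" and d: "d > 0" and e: "\<epsilon> > 0" and K: "K > 0" and X: "X = K * Da" "1 \<le> X"
    and S0: "exp S0 \<le> exp a0 * exp \<epsilon>" and W: "W \<ge> 0" and s: "s = exp \<epsilon> * W / d"
    and z: "\<zeta> = s + 2 * s * \<epsilon> * Da"
  shows "(exp S0 * K * m + (m + K * m * Da) * (\<epsilon> * exp a0)) * W \<le> \<zeta> * K * (d * exp a0 * m)"
proof -
  define A where "A = exp a0"
  have A: "A > 0" by (simp add: A_def)
  have Weq: "exp \<epsilon> * W = s * d" using s d by simp
  have Wle: "W \<le> s * d"
  proof -
    have "1 * W \<le> exp \<epsilon> * W" using e W by (intro mult_right_mono) auto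
    then show ?thesis using Weq by simp
  qed
  have T1: "exp S0 * K * m * W \<le> A * K * m * (s * d)"
  proof -
    have "exp S0 * (K * m * W) \<le> (A * exp \<epsilon>) * (K * m * W)"
      using S0 K m W by (intro mult_right_mono) (auto simp: A_def)
    also have "\<dots> = A * K * m * (exp \<epsilon> * W)" by (simp add: algebra_simps)
    also have "\<dots> = A * K * m * (s * d)" using Weq by simp
    finally show ?thesis by (simp add: algebra_simps)
  qed
  have T2: "(m + K * m * Da) * (\<epsilon> * A) * W \<le> (2 * X * m) * (\<epsilon> * A) * (s * d)"
  proof -
    have meq: "m + K * m * Da = m * (1 + X)" using X by (simp add: algebra_simps)
    also have "\<dots> \<le> 2 * X * m" using X(2) m by (simp add: algebra_simps)
    finally have h1: "m + K * m * Da \<le> 2 * X * m" .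
    have h0: "0 \<le> m + K * m * Da" unfolding meq using X(2) m by simp
    have "(m + K * m * Da) * (\<epsilon> * A) \<le> (2 * X * m) * (\<epsilon> * A)"
      using h1 e A by (intro mult_right_mono) auto
    moreover have "0 \<le> (2 * X * m) * (\<epsilon> * A)" using X m e A by simp
    ultimately show ?thesis using Wle W h0 e A by (intro mult_mono) auto
  qed
  have "\<zeta> * K * (d * A * m) = A * K * m * (s * d) + (2 * X * m) * (\<epsilon> * A) * (s * d)"
    using z X by (simp add: algebra_simps)
  then show ?thesis using T1 T2 unfolding A_def[symmetric] by (simp add: algebra_simps)
qed

theorem lemma3p3:
  fixes f :: "'x::metric_space \<Rightarrow> 'x"
    and g :: "'x \<Rightarrow> 'y::metric_space \<Rightarrow> 'y"
    and \<phi> :: "'x \<times> 'y \<Rightarrow> real"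
    and Lf :: "'x \<times> 'y \<Rightarrow> real"
    and \<A> :: "('x \<times> 'y) set"
    and \<U> :: "('x \<times> 'y) set set"
    and d q :: nat
    and \<gamma> \<delta>f L \<alpha> \<epsilon> s \<zeta> :: real
  defines "F \<equiv> (\<lambda>(x, y). (f x, g x y))"
  assumes X: "compact (UNIV :: 'x set)" "connected (UNIV :: 'x set)" "geodesic_space (dist :: 'x \<Rightarrow> 'x \<Rightarrow> real)"
    and Y: "compact (UNIV :: 'y set)" "connected (UNIV :: 'y set)" "geodesic_space (dist :: 'y \<Rightarrow> 'y \<Rightarrow> real)"
    and F_lip: "\<exists>C. \<forall>z w. pdist (F z) (F w) \<le> C * pdist z w"
    and F_lh: "local_homeo F"
    and f_exp: "1 < \<gamma>" "0 < \<delta>f" "\<forall>x x'. dist x x' \<le> \<delta>f \<longrightarrow> \<gamma> * dist x x' \<le> dist (f x) (f x')"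
    and g_deg: "\<forall>x y. finite {yb. g x yb = y} \<and> card {yb. g x yb = y} = d"
    and Lf_cont: "continuous_on UNIV Lf"
    and Lf_inv: "\<forall>z. \<exists>U. open U \<and> z \<in> U \<and> inj_on F U \<and>
                   (\<forall>w\<in>U. \<forall>w'\<in>U. pdist w w' \<le> Lf z * pdist (F w) (F w'))"
    and A1: "1 \<le> L" "open \<A>" "\<forall>z\<in>\<A>. Lf z \<le> L" "\<forall>z. z \<notin> \<A> \<longrightarrow> Lf z < 1 / \<gamma>"
    and A2: "finite \<U>" "\<forall>U\<in>\<U>. open U \<and> inj_on F U" "\<Union>\<U> = UNIV"
            "\<exists>\<V>\<subseteq>\<U>. card \<V> = q \<and> \<A> \<subseteq> \<Union>\<V>" "q < d"
            "\<forall>U\<in>\<U>. \<forall>c l. min_geodesic pdist c l \<longrightarrow>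
                (\<forall>C1\<in>components (F -` (c ` {0..l})). \<forall>C2\<in>components (F -` (c ` {0..l})).
                   C1 \<inter> U \<noteq> {} \<longrightarrow> C2 \<inter> U \<noteq> {} \<longrightarrow> C1 = C2)"
    and alpha: "0 < \<alpha>" "\<alpha> < 1"
    and phi_holder: "holder \<alpha> pdist \<phi>"
    and eps: "0 < \<epsilon>"
    and s_def: "s = exp \<epsilon> * ((real d - real q) * \<gamma> powr (- \<alpha>) + real q * L powr \<alpha>) / real d"
    and s_lt: "s < 1"
    and zeta_def: "\<zeta> = s + 2 * s * \<epsilon> * diameter (UNIV :: 'y set) powr \<alpha>"
    and zeta_lt: "\<zeta> < 1"
    and P: "Sup (range \<phi>) - Inf (range \<phi>) < \<epsilon>"
           "holder_semi \<alpha> pdist (\<lambda>z. exp (\<phi> z)) < \<epsilon> * exp (Inf (range \<phi>))"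
  shows "\<exists>K0>0. \<forall>K\<ge>K0.
           (\<forall>x. \<forall>\<psi>\<in>hcone \<alpha> K. transfer g \<phi> x \<psi> \<in> hcone \<alpha> (\<zeta> * K)) \<and>
           (\<exists>M::real. \<forall>x. \<forall>\<psi>1\<in>transfer g \<phi> x ` hcone \<alpha> K. \<forall>\<psi>2\<in>transfer g \<phi> x ` hcone \<alpha> K.
               \<psi>1 \<noteq> (\<lambda>_. 0) \<longrightarrow> \<psi>2 \<noteq> (\<lambda>_. 0) \<longrightarrow>
               hilbert_metric (hcone \<alpha> K) \<psi>1 \<psi>2 \<le> ereal M)"
proof -
  have Fe: "F = (\<lambda>(x, y). (f x, g x y))" by (simp add: F_def)
  have fibs: "fib (g x) (\<lambda>b. Lf (x, b)) d" for x
    by (rule fib_inst[OF Fe F_lh f_exp g_deg Lf_inv])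
  have bY: "bounded (UNIV::'y set)" using Y(1) by (rule compact_imp_bounded)
  have bX: "bounded (UNIV::'x set)" using X(1) by (rule compact_imp_bounded)
  define Dy where "Dy = diameter (UNIV::'y set)"
  define Dx where "Dx = diameter (UNIV::'x set)"
  have dpos: "real d > 0" using A2(5) by simp
  have pd_le: "pdist a b \<le> Dx + Dy" for a b :: "'x \<times> 'y"
  proof -
    have "dist (fst a) (fst b) \<le> Dx" unfolding Dx_def by (rule diameter_bounded_bound[OF bX]) auto
    moreover have "dist (snd a) (snd b) \<le> Dy" unfolding Dy_def by (rule diameter_bounded_bound[OF bY]) auto
    ultimately show ?thesis by (simp add: pdist_def)
  qed
  have pd0: "pdist a b \<ge> 0" for a b :: "'x \<times> 'y" by (simp add: pdist_def)
  have pdpos: "pdist a b > 0" if "a \<noteq> b" for a b :: "'x \<times> 'y"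
  proof -
    have "fst a \<noteq> fst b \<or> snd a \<noteq> snd b" using that by (metis prod.expand)
    then show ?thesis by (auto simp: pdist_def add_pos_nonneg add_nonneg_pos)
  qed
  have pdaa: "pdist a a = 0" for a :: "'x \<times> 'y" by (simp add: pdist_def)
  obtain C\<phi> where C\<phi>: "\<And>a b. \<bar>\<phi> a - \<phi> b\<bar> \<le> C\<phi> * pdist a b powr \<alpha>"
    using phi_holder unfolding holder_def by blast
  define B\<phi> where "B\<phi> = \<bar>C\<phi>\<bar> * (Dx + Dy) powr \<alpha>"
  have C\<phi>': "\<bar>\<phi> a - \<phi> b\<bar> \<le> \<bar>C\<phi>\<bar> * pdist a b powr \<alpha>" for a b
  proof -
    have "C\<phi> * pdist a b powr \<alpha> \<le> \<bar>C\<phi>\<bar> * pdist a b powr \<alpha>" by (intro mult_right_mono) auto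
    then show ?thesis using C\<phi>[of a b] by linarith
  qed
  have phb: "\<bar>\<phi> a - \<phi> b\<bar> \<le> B\<phi>" for a b
  proof -
    have "pdist a b powr \<alpha> \<le> (Dx + Dy) powr \<alpha>" using pd_le pd0 alpha by (intro powr_mono2) auto
    then have "\<bar>C\<phi>\<bar> * pdist a b powr \<alpha> \<le> B\<phi>" unfolding B\<phi>_def by (intro mult_left_mono) auto
    then show ?thesis using C\<phi>'[of a b] by linarith
  qed
  define z0 :: "'x \<times> 'y" where "z0 = undefined"
  have bdda: "bdd_above (range \<phi>)" unfolding bdd_above_def
  proof (intro exI[of _ "\<phi> z0 + B\<phi>"] ballI)
    fix r assume "r \<in> range \<phi>"
    then obtain z where "r = \<phi> z" by blast
    then show "r \<le> \<phi> z0 + B\<phi>" using phb[of z z0] by simp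
  qed
  have bddb: "bdd_below (range \<phi>)" unfolding bdd_below_def
  proof (intro exI[of _ "\<phi> z0 - B\<phi>"] ballI)
    fix r assume "r \<in> range \<phi>"
    then obtain z where "r = \<phi> z" by blast
    then show "\<phi> z0 - B\<phi> \<le> r" using phb[of z0 z] by simp
  qed
  define a0 where "a0 = Inf (range \<phi>)"
  define S0 where "S0 = Sup (range \<phi>)"
  have pha: "a0 \<le> \<phi> z" for z unfolding a0_def using bddb by (auto intro: cInf_lower)
  have phS: "\<phi> z \<le> S0" for z unfolding S0_def using bdda by (auto intro: cSup_upper)
  have S0a0: "exp S0 \<le> exp a0 * exp \<epsilon>"
  proof -
    have "S0 \<le> a0 + \<epsilon>" using P(1) by (simp add: a0_def S0_def)
    then show ?thesis by (simp add: exp_add[symmetric])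
  qed
  define E where "E = holder_semi \<alpha> pdist (\<lambda>z. exp (\<phi> z))"
  have eholder: "holder \<alpha> pdist (\<lambda>z. exp (\<phi> z))" unfolding holder_def
  proof (intro exI[of _ "exp S0 * \<bar>C\<phi>\<bar>"] allI)
    fix a b
    have "\<bar>exp (\<phi> a) - exp (\<phi> b)\<bar> \<le> exp S0 * \<bar>\<phi> a - \<phi> b\<bar>" by (rule exp_lip) (use phS in auto)
    also have "\<dots> \<le> exp S0 * (\<bar>C\<phi>\<bar> * pdist a b powr \<alpha>)" by (intro mult_left_mono C\<phi>') auto
    finally show "\<bar>exp (\<phi> a) - exp (\<phi> b)\<bar> \<le> exp S0 * \<bar>C\<phi>\<bar> * pdist a b powr \<alpha>" by simp
  qed
  have ebound: "\<bar>exp (\<phi> a) - exp (\<phi> b)\<bar> \<le> \<epsilon> * exp a0 * pdist a b powr \<alpha>" for a b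
  proof -
    have "\<bar>exp (\<phi> a) - exp (\<phi> b)\<bar> \<le> E * pdist a b powr \<alpha>"
      unfolding E_def by (rule holder_bound[OF eholder pdpos pdaa])
    also have "\<dots> \<le> \<epsilon> * exp a0 * pdist a b powr \<alpha>"
      using P(2) by (intro mult_right_mono) (auto simp: E_def a0_def)
    finally show ?thesis .
  qed
  define W where "W = (real d - real q) * \<gamma> powr (- \<alpha>) + real q * L powr \<alpha>"
  have Wpos: "W > 0"
  proof -
    have "(real d - real q) * \<gamma> powr (- \<alpha>) > 0" using A2(5) f_exp(1) by simp
    moreover have "real q * L powr \<alpha> \<ge> 0" by simp
    ultimately show ?thesis unfolding W_def by linarith
  qed
  have s_eq: "s = exp \<epsilon> * W / real d" using s_def by (simp add: W_def)
  have spos: "s > 0" using s_eq Wpos dpos by simp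
  have zpos: "\<zeta> > 0"
  proof -
    have "2 * s * \<epsilon> * Dy powr \<alpha> \<ge> 0" using spos eps by simp
    then show ?thesis using zeta_def spos unfolding Dy_def by linarith
  qed
  define K0 where "K0 = 1 + 1 / Dy powr \<alpha>"
  have K0pos: "K0 > 0" by (simp add: K0_def add_pos_nonneg)
  have part1: "transfer g \<phi> x \<psi> \<in> hcone \<alpha> (\<zeta> * K)" if K: "K \<ge> K0" and \<psi>: "\<psi> \<in> hcone \<alpha> K" for K x \<psi>
  proof (cases "\<psi> = (\<lambda>_. 0)")
    case True
    then have "transfer g \<phi> x \<psi> = (\<lambda>_. 0)" by (simp add: transfer_def)
    then show ?thesis by (simp add: hcone_def)
  next
    case False
    have Kpos: "K > 0" using K K0pos by simp
    note cf = cone_facts[OF \<psi> False _ _ bY]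
    define m where "m = Inf (range \<psi>)"
    have m: "m > 0" "\<forall>y. m \<le> \<psi> y" "\<forall>y. \<psi> y \<le> m + K * m * Dy powr \<alpha>"
      "\<forall>a b. \<bar>\<psi> a - \<psi> b\<bar> \<le> K * m * dist a b powr \<alpha>"
      using cf Kpos alpha unfolding m_def[symmetric] Dy_def[symmetric] by auto
    define Lp where "Lp = transfer g \<phi> x \<psi>"
    have Lp: "Lp y = (\<Sum>b\<in>g x -` {y}. exp (\<phi> (x, b)) * \<psi> b)" for y
    proof -
      have "{yb. g x yb = y} = g x -` {y}" by auto
      then show ?thesis by (simp add: Lp_def transfer_def)
    qed
    interpret fx: fib "g x" "\<lambda>b. Lf (x, b)" d by (rule fibs)
    define c where "c = real d * exp a0 * m"
    have cpos: "c > 0" using dpos m(1) by (simp add: c_def)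
    have "Lp \<in> hcone \<alpha> (\<zeta> * K)"
    proof (rule in_cone[of "\<zeta> * K" c])
      show "0 \<le> \<zeta> * K" using zpos Kpos by simp
      show "0 < c" by (rule cpos)
    next
      fix y
      have "real (card (g x -` {y})) * (exp a0 * m) \<le> (\<Sum>b\<in>g x -` {y}. exp (\<phi> (x, b)) * \<psi> b)"
      proof (rule sum_bounded_below)
        fix b
        show "exp a0 * m \<le> exp (\<phi> (x, b)) * \<psi> b"
          using pha m(1,2) by (intro mult_mono) auto
      qed
      then show "c \<le> Lp y" using fx.crd by (simp add: Lp c_def algebra_simps)
    next
      fix y y'
      show "\<bar>Lp y - Lp y'\<bar> \<le> \<zeta> * K * c * dist y y' powr \<alpha>"
      proof (cases "y = y'")
        case True then show ?thesis by simp
      next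
        case yy: False
        obtain \<sigma> where \<sigma>: "bij_betw \<sigma> (g x -` {y}) (g x -` {y'})"
          "(\<Sum>b\<in>g x -` {y}. dist b (\<sigma> b) powr \<alpha>) \<le> W * dist y y' powr \<alpha>"
          using matching[OF Fe fibs F_lip f_exp Y(3) A1(1,3,4) A2(1,4,5,6) alpha(1)]
          unfolding W_def by blast
        define Pre where "Pre = g x -` {y}"
        have d1: "0 < dist y y'" using yy by simp
        have d2: "dist y y' \<le> Dy" unfolding Dy_def by (rule diameter_bounded_bound[OF bY]) auto
        have "Dy > 0" using d1 d2 by linarith
        then have Dypos: "Dy powr \<alpha> > 0" by simp
        have KD: "1 \<le> K * Dy powr \<alpha>"
        proof -
          have "1 / Dy powr \<alpha> \<le> K" using K unfolding K0_def by simp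
          then show ?thesis using Dypos by (simp add: divide_le_eq mult.commute)
        qed
        define Q where "Q = exp S0 * K * m + (m + K * m * Dy powr \<alpha>) * (\<epsilon> * exp a0)"
        have Lp': "Lp y' = (\<Sum>b\<in>Pre. exp (\<phi> (x, \<sigma> b)) * \<psi> (\<sigma> b))"
          unfolding Lp Pre_def using sum.reindex_bij_betw[OF \<sigma>(1), of "\<lambda>b. exp (\<phi> (x, b)) * \<psi> b"] by simp
        have per: "\<bar>exp (\<phi> (x, b)) * \<psi> b - exp (\<phi> (x, \<sigma> b)) * \<psi> (\<sigma> b)\<bar> \<le> Q * dist b (\<sigma> b) powr \<alpha>" for b
        proof -
          define e1 where "e1 = exp (\<phi> (x, b))"
          define e2 where "e2 = exp (\<phi> (x, \<sigma> b))"
          define db where "db = dist b (\<sigma> b) powr \<alpha>"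
          have db0: "db \<ge> 0" by (simp add: db_def)
          have "e1 * \<psi> b - e2 * \<psi> (\<sigma> b) = e1 * (\<psi> b - \<psi> (\<sigma> b)) + \<psi> (\<sigma> b) * (e1 - e2)"
            by (simp add: algebra_simps)
          then have "\<bar>e1 * \<psi> b - e2 * \<psi> (\<sigma> b)\<bar> \<le> \<bar>e1 * (\<psi> b - \<psi> (\<sigma> b))\<bar> + \<bar>\<psi> (\<sigma> b) * (e1 - e2)\<bar>"
            by (simp add: abs_triangle_ineq)
          also have "\<bar>e1 * (\<psi> b - \<psi> (\<sigma> b))\<bar> \<le> exp S0 * (K * m * db)"
          proof -
            have "\<bar>e1 * (\<psi> b - \<psi> (\<sigma> b))\<bar> = e1 * \<bar>\<psi> b - \<psi> (\<sigma> b)\<bar>" by (simp add: abs_mult e1_def)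
            also have "\<dots> \<le> exp S0 * (K * m * db)"
              using m(4) phS by (intro mult_mono) (auto simp: e1_def db_def)
            finally show ?thesis .
          qed
          also have "\<bar>\<psi> (\<sigma> b) * (e1 - e2)\<bar> \<le> (m + K * m * Dy powr \<alpha>) * (\<epsilon> * exp a0 * db)"
          proof -
            have "\<bar>\<psi> (\<sigma> b) * (e1 - e2)\<bar> = \<psi> (\<sigma> b) * \<bar>e1 - e2\<bar>"
              using m(1,2) by (simp add: abs_mult) (meson abs_of_pos less_le_trans)
            also have "\<dots> \<le> (m + K * m * Dy powr \<alpha>) * (\<epsilon> * exp a0 * db)"
            proof (rule mult_mono)
              show "\<psi> (\<sigma> b) \<le> m + K * m * Dy powr \<alpha>" using m(3) by blast
              have "\<bar>e1 - e2\<bar> \<le> \<epsilon> * exp a0 * pdist (x, b) (x, \<sigma> b) powr \<alpha>"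
                unfolding e1_def e2_def by (rule ebound)
              then show "\<bar>e1 - e2\<bar> \<le> \<epsilon> * exp a0 * db" by (simp add: pdist_same_fst db_def)
              show "0 \<le> m + K * m * Dy powr \<alpha>" using m(1) Kpos by simp
            qed simp
            finally show ?thesis .
          qed
          finally have "\<bar>e1 * \<psi> b - e2 * \<psi> (\<sigma> b)\<bar> \<le> exp S0 * (K * m * db) + (m + K * m * Dy powr \<alpha>) * (\<epsilon> * exp a0 * db)"
            by simp
          also have "\<dots> = Q * db" by (simp add: Q_def algebra_simps)
          finally show ?thesis by (simp add: e1_def e2_def db_def)
        qed
        have "\<bar>Lp y - Lp y'\<bar> = \<bar>\<Sum>b\<in>Pre. exp (\<phi> (x, b)) * \<psi> b - exp (\<phi> (x, \<sigma> b)) * \<psi> (\<sigma> b)\<bar>"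
          unfolding Lp' by (simp add: Lp Pre_def sum_subtractf)
        also have "\<dots> \<le> (\<Sum>b\<in>Pre. \<bar>exp (\<phi> (x, b)) * \<psi> b - exp (\<phi> (x, \<sigma> b)) * \<psi> (\<sigma> b)\<bar>)"
          by (rule sum_abs)
        also have "\<dots> \<le> (\<Sum>b\<in>Pre. Q * dist b (\<sigma> b) powr \<alpha>)" by (rule sum_mono) (rule per)
        also have "\<dots> = Q * (\<Sum>b\<in>Pre. dist b (\<sigma> b) powr \<alpha>)" by (simp add: sum_distrib_left)
        also have "\<dots> \<le> Q * (W * dist y y' powr \<alpha>)"
        proof (rule mult_left_mono)
          show "(\<Sum>b\<in>Pre. dist b (\<sigma> b) powr \<alpha>) \<le> W * dist y y' powr \<alpha>" using \<sigma>(2) by (simp add: Pre_def)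
          show "0 \<le> Q" using m(1) Kpos eps by (simp add: Q_def)
        qed
        also have "\<dots> = (Q * W) * dist y y' powr \<alpha>" by simp
        also have "\<dots> \<le> (\<zeta> * K * c) * dist y y' powr \<alpha>"
        proof (rule mult_right_mono)
          show "Q * W \<le> \<zeta> * K * c"
            unfolding Q_def c_def
            by (rule final_ineq[OF m(1) dpos eps Kpos refl KD S0a0 _ s_eq]) (use Wpos zeta_def Dy_def in auto)
        qed simp
        finally show ?thesis .
      qed
    qed
    then show ?thesis by (simp add: Lp_def)
  qed
  have main: "(\<forall>x. \<forall>\<psi>\<in>hcone \<alpha> K. transfer g \<phi> x \<psi> \<in> hcone \<alpha> (\<zeta> * K)) \<and>
           (\<exists>M::real. \<forall>x. \<forall>\<psi>1\<in>transfer g \<phi> x ` hcone \<alpha> K. \<forall>\<psi>2\<in>transfer g \<phi> x ` hcone \<alpha> K.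
               \<psi>1 \<noteq> (\<lambda>_. 0) \<longrightarrow> \<psi>2 \<noteq> (\<lambda>_. 0) \<longrightarrow>
               hilbert_metric (hcone \<alpha> K) \<psi>1 \<psi>2 \<le> ereal M)" if K: "K0 \<le> K" for K
  proof (rule conjI)
    have Kpos: "K > 0" using K K0pos by simp
    show "\<forall>x. \<forall>\<psi>\<in>hcone \<alpha> K. transfer g \<phi> x \<psi> \<in> hcone \<alpha> (\<zeta> * K)" using part1[OF K] by blast
    define M where "M = 2 * ln ((1 + \<zeta> + \<zeta>*K*diameter (UNIV::'y set) powr \<alpha>) / (1 - \<zeta>))"
    show "\<exists>M::real. \<forall>x. \<forall>\<psi>1\<in>transfer g \<phi> x ` hcone \<alpha> K. \<forall>\<psi>2\<in>transfer g \<phi> x ` hcone \<alpha> K.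
               \<psi>1 \<noteq> (\<lambda>_. 0) \<longrightarrow> \<psi>2 \<noteq> (\<lambda>_. 0) \<longrightarrow>
               hilbert_metric (hcone \<alpha> K) \<psi>1 \<psi>2 \<le> ereal M"
    proof (intro exI[of _ M] allI ballI impI)
      fix x \<psi>1 \<psi>2
      assume h1: "\<psi>1 \<in> transfer g \<phi> x ` hcone \<alpha> K" and h2: "\<psi>2 \<in> transfer g \<phi> x ` hcone \<alpha> K"
        and n1: "\<psi>1 \<noteq> (\<lambda>_. 0)" and n2: "\<psi>2 \<noteq> (\<lambda>_. 0)"
      have c1: "\<psi>1 \<in> hcone \<alpha> (\<zeta> * K)" using h1 part1[OF K] by blast
      have c2: "\<psi>2 \<in> hcone \<alpha> (\<zeta> * K)" using h2 part1[OF K] by blast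
      show "hilbert_metric (hcone \<alpha> K) \<psi>1 \<psi>2 \<le> ereal M"
        unfolding M_def by (rule hilbert_bound[OF c1 n1 c2 n2 Kpos zpos zeta_lt alpha(1) bY])
    qed
  qed
  show ?thesis using main K0pos by blast
qed

end
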